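(* Consider the following probabilistic synthesis model. Let $N,M\ge 1$, let $\sigma^2>0$, and let $\boldsymbol{\Psi}_1,\dots,\boldsymbol{\Psi}_N\in\mathbb{C}^{N\times M}$ be given matrices. The observation ${\mathbf y}\in\mathbb{R}^N$ is $$ {\mathbf y}=\Re\Big(\sum_{n=1}^N\boldsymbol{\Psi}_n{\mathbf w}_n\Big)+\boldsymbol{\epsilon}, $$ where $\boldsymbol{\epsilon}\sim\mathcal{N}(\mathbf 0,\sigma^2{\mathbf I}_N)$ is real Gaussian white noise independent of the latent coefficients, and the latent vectors ${\mathbf w}_1,\dots,{\mathbf w}_N\in\mathbb{C}^M$ are mutually decorrelated (hence independent) zero-mean circular complex Gaussian vectors, ${\mathbf w}_n\sim\mathscr{CN}_c(\mathbf 0,{\mathbf C}(\theta_n))$. Here, for a fixed Hermitian positive-semidefinite function $f$ and fixed scales $s_1,\dots,s_M$, the matrix ${\mathbf C}(\theta)\in\mathbb{C}^{M\times M}$ is defined by $[{\mathbf C}(\theta)]_{mm'}=f(s_m+\theta,s_{m'}+\theta)$, and $\boldsymbol{\theta}=(\theta_1,\dots,\theta_N)\in\mathbb{R}^N$ is an unknown parameter. For a parameter vector $\boldsymbol{\theta}$ define $$ {\mathbf C}_y(\boldsymbol{\theta})=\sigma^2{\mathbf I}+\tfrac12\Re\Big(\sum_{n=1}^N\boldsymbol{\Psi}_n{\mathbf C}(\theta_n)\boldsymbol{\Psi}_n^H\Big), $$ let ${\mathbf D}=[\boldsymbol{\Psi}_1\ \cdots\ \boldsymbol{\Psi}_N]\in\mathbb{C}^{N\times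 MN}$, let $\boldsymbol{\Gamma}_0(\boldsymbol{\theta})$ be the block-diagonal matrix with diagonal blocks ${\mathbf C}(\theta_1),\dots,{\mathbf C}(\theta_N)$, and let $$ \boldsymbol{\Gamma}(\boldsymbol{\theta})=\boldsymbol{\Gamma}_0(\boldsymbol{\theta})-\tfrac14\boldsymbol{\Gamma}_0(\boldsymbol{\theta}){\mathbf D}^H{\mathbf C}_y(\boldsymbol{\theta})^{-1}{\mathbf D}\boldsymbol{\Gamma}_0(\boldsymbol{\theta}) $$ (the posterior covariance of ${\mathbf W}=\mathsf{vec}({\mathbf w}_1,\dots,{\mathbf w}_N)$ given ${\mathbf y}$), with $\boldsymbol{\Gamma}_n(\boldsymbol{\theta})\in\mathbb{C}^{M\times M}$ its $n$-th diagonal block. Then the Expectation-Maximization algorithm for maximum-likelihood estimation of $\boldsymbol{\theta}$ from the observation ${\mathbf y}$, with ${\mathbf W}$ as latent variable, starting at iteration $k$ from the current estimate $\tilde{\boldsymbol{\theta}}^{(k-1)}$, consists of the following two steps: 1. for each $n\in\{1,\dots,N\}$, the posterior mean of ${\mathbf w}_n$ is $$ \tilde{\mathbf w}_n^{(k)}=\tfrac12{\mathbf C}\big(\tilde\theta_n^{(k-1)}\big)\boldsymbol{\Psi}_n^H{\mathbf C}_y\big(\tilde{\boldsymbol{\theta}}^{(k-1)}\big)^{-1}{\mathbf y}; $$ 2. the parameter is updated componentwise by $\tilde\theta_n^{(k)}=\arg\min_{\theta}Q_{kn}(\theta)$, where $$ Q_{kn}(\theta)=\log|\det({\mathbf C}(\theta))|+\tilde{\mathbf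 w}_n^{(k)H}{\mathbf C}(\theta)^{-1}\tilde{\mathbf w}_n^{(k)}+\mathrm{Trace}\Big({\mathbf C}(\theta)^{-1}\boldsymbol{\Gamma}_n\big(\tilde{\boldsymbol{\theta}}^{(k-1)}\big)\Big). $$
   Context: In the paper's setting, $\psi$ is an analysis wavelet, $\psi_s(t)=q^{-s/2}\psi(q^{-s}t)$ for a constant $q>1$, $s\in\{s_1,\dots,s_M\}$, the signal is sampled at $N$ times $\tau_1,\dots,\tau_N$ (finite periodic setting), and $\boldsymbol{\Psi}_n$ is the matrix whose $m$-th column is $(\psi_{s_m}(\tau_{1-n}),\dots,\psi_{s_m}(\tau_{N-n}))^T$; the claim only uses that the $\boldsymbol{\Psi}_n$ are fixed complex $N\times M$ matrices. $\mathscr{CN}_c(\mathbf 0,{\mathbf C})$ denotes the zero-mean circular complex Gaussian distribution with covariance ${\mathbf C}$. The function $f$ is Hermitian and positive semidefinite, and ${\mathbf C}(\theta)$ is assumed invertible where used. *)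

theory Defs
  imports "HOL-Probability.Probability"
begin

definition herm_psd_fun :: "(real \<Rightarrow> real \<Rightarrow> complex) \<Rightarrow> bool" where
  "herm_psd_fun f \<longleftrightarrow>
     (\<forall>x y. f x y = cnj (f y x)) \<and>
     (\<forall>(xs::real list) (c::complex list). length c = length xs \<longrightarrow>
        0 \<le> Re (\<Sum>i<length xs. \<Sum>j<length xs. cnj (c!i) * c!j * f (xs!i) (xs!j)))"

definition adj :: "complex^'a^'b \<Rightarrow> complex^'b^'a" where
  "adj A = (\<chi> i j. cnj (A$j$i))"

definition Re_mat :: "complex^'a^'b \<Rightarrow> real^'a^'b" where
  "Re_mat A = (\<chi> i j. Re (A$i$j))"

definition cplx_vec :: "real^'a \<Rightarrow> complex^'a" where
  "cplx_vec x = (\<chi> i. complex_of_real (x$i))"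

definition cplx_mat :: "real^'a^'b \<Rightarrow> complex^'a^'b" where
  "cplx_mat A = (\<chi> i j. complex_of_real (A$i$j))"

definition mtrace :: "complex^'a^'a \<Rightarrow> complex" where
  "mtrace A = (\<Sum>i\<in>UNIV. A$i$i)"

definition hform :: "complex^'a \<Rightarrow> complex^'a^'a \<Rightarrow> complex" where
  "hform w A = (\<Sum>i\<in>UNIV. cnj (w$i) * (A *v w)$i)"

definition Cmat :: "(real \<Rightarrow> real \<Rightarrow> complex) \<Rightarrow> ('m::finite \<Rightarrow> real) \<Rightarrow> real \<Rightarrow> complex^'m^'m" where
  "Cmat f s \<theta> = (\<chi> m m'. f (s m + \<theta>) (s m' + \<theta>))"

definition Cy :: "(real \<Rightarrow> real \<Rightarrow> complex) \<Rightarrow> ('m::finite \<Rightarrow> real) \<Rightarrow> ('n::finite \<Rightarrow> complex^'m^'n)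
                 \<Rightarrow> real \<Rightarrow> real^'n \<Rightarrow> real^'n^'n" where
  "Cy f s \<Psi> \<sigma> \<theta> = (\<sigma>\<^sup>2) *\<^sub>R mat 1 +
      (1/2) *\<^sub>R Re_mat (\<Sum>n\<in>UNIV. \<Psi> n ** Cmat f s (\<theta>$n) ** adj (\<Psi> n))"

definition w_tilde :: "(real \<Rightarrow> real \<Rightarrow> complex) \<Rightarrow> ('m::finite \<Rightarrow> real) \<Rightarrow> ('n::finite \<Rightarrow> complex^'m^'n)
                 \<Rightarrow> real \<Rightarrow> real^'n \<Rightarrow> real^'n \<Rightarrow> 'n \<Rightarrow> complex^'m" where
  "w_tilde f s \<Psi> \<sigma> \<theta> y n =
     (1/2) *\<^sub>R ((Cmat f s (\<theta>$n) ** adj (\<Psi> n)) *v cplx_vec (matrix_inv (Cy f s \<Psi> \<sigma> \<theta>) *v y))"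

definition Dmat :: "('n::finite \<Rightarrow> complex^'m::finite^'n) \<Rightarrow> complex^('n \<times> 'm)^'n" where
  "Dmat \<Psi> = (\<chi> i. \<chi> p. \<Psi> (fst p) $ i $ snd p)"

definition Gamma0 :: "(real \<Rightarrow> real \<Rightarrow> complex) \<Rightarrow> ('m::finite \<Rightarrow> real) \<Rightarrow> real^'n::finite
                 \<Rightarrow> complex^('n \<times> 'm)^('n \<times> 'm)" where
  "Gamma0 f s \<theta> = (\<chi> p q. if fst p = fst q then Cmat f s (\<theta>$fst p) $ snd p $ snd q else 0)"

definition Gamma :: "(real \<Rightarrow> real \<Rightarrow> complex) \<Rightarrow> ('m::finite \<Rightarrow> real) \<Rightarrow> ('n::finite \<Rightarrow> complex^'m^'n)
                 \<Rightarrow> real \<Rightarrow> real^'n \<Rightarrow> complex^('n \<times> 'm)^('n \<times> 'm)" where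
  "Gamma f s \<Psi> \<sigma> \<theta> = Gamma0 f s \<theta> -
     (1/4) *\<^sub>R (Gamma0 f s \<theta> ** adj (Dmat \<Psi>) ** cplx_mat (matrix_inv (Cy f s \<Psi> \<sigma> \<theta>))
                 ** Dmat \<Psi> ** Gamma0 f s \<theta>)"

definition Gamma_blk :: "(real \<Rightarrow> real \<Rightarrow> complex) \<Rightarrow> ('m::finite \<Rightarrow> real) \<Rightarrow> ('n::finite \<Rightarrow> complex^'m^'n)
                 \<Rightarrow> real \<Rightarrow> real^'n \<Rightarrow> 'n \<Rightarrow> complex^'m^'m" where
  "Gamma_blk f s \<Psi> \<sigma> \<theta> n = (\<chi> m m'. Gamma f s \<Psi> \<sigma> \<theta> $ (n,m) $ (n,m'))"

definition Qkn :: "(real \<Rightarrow> real \<Rightarrow> complex) \<Rightarrow> ('m::finite \<Rightarrow> real) \<Rightarrow> ('n::finite \<Rightarrow> complex^'m^'n)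
                 \<Rightarrow> real \<Rightarrow> real^'n \<Rightarrow> real^'n \<Rightarrow> 'n \<Rightarrow> real \<Rightarrow> real" where
  "Qkn f s \<Psi> \<sigma> thold y n t =
     ln (cmod (det (Cmat f s t)))
     + Re (hform (w_tilde f s \<Psi> \<sigma> thold y n) (matrix_inv (Cmat f s t)))
     + Re (mtrace (matrix_inv (Cmat f s t) ** Gamma_blk f s \<Psi> \<sigma> thold n))"

definition cgauss_density :: "complex^'m::finite^'m \<Rightarrow> complex^'m \<Rightarrow> real" where
  "cgauss_density C w =
     exp (- Re (hform w (matrix_inv C))) / (pi ^ CARD('m) * cmod (det C))"

definition prior_density :: "(real \<Rightarrow> real \<Rightarrow> complex) \<Rightarrow> ('m::finite \<Rightarrow> real) \<Rightarrow> real^'n::finite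
                 \<Rightarrow> complex^'m^'n \<Rightarrow> real" where
  "prior_density f s \<theta> W = (\<Prod>n\<in>UNIV. cgauss_density (Cmat f s (\<theta>$n)) (W$n))"

definition lik_density :: "('n::finite \<Rightarrow> complex^'m::finite^'n) \<Rightarrow> real \<Rightarrow> real^'n
                 \<Rightarrow> complex^'m^'n \<Rightarrow> real" where
  "lik_density \<Psi> \<sigma> y W =
     (\<Prod>i\<in>UNIV. normal_density (Re ((\<Sum>n\<in>UNIV. \<Psi> n *v (W$n)) $ i)) \<sigma> (y$i))"

definition joint_density :: "(real \<Rightarrow> real \<Rightarrow> complex) \<Rightarrow> ('m::finite \<Rightarrow> real) \<Rightarrow> ('n::finite \<Rightarrow> complex^'m^'n)
                 \<Rightarrow> real \<Rightarrow> real^'n \<Rightarrow> real^'n \<Rightarrow> complex^'m^'n \<Rightarrow> real" where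
  "joint_density f s \<Psi> \<sigma> \<theta> y W = lik_density \<Psi> \<sigma> y W * prior_density f s \<theta> W"

definition post_density :: "(real \<Rightarrow> real \<Rightarrow> complex) \<Rightarrow> ('m::finite \<Rightarrow> real) \<Rightarrow> ('n::finite \<Rightarrow> complex^'m^'n)
                 \<Rightarrow> real \<Rightarrow> real^'n \<Rightarrow> real^'n \<Rightarrow> complex^'m^'n \<Rightarrow> real" where
  "post_density f s \<Psi> \<sigma> \<theta> y W =
     joint_density f s \<Psi> \<sigma> \<theta> y W / (\<integral>V. joint_density f s \<Psi> \<sigma> \<theta> y V \<partial>lborel)"

definition post_mean :: "(real \<Rightarrow> real \<Rightarrow> complex) \<Rightarrow> ('m::finite \<Rightarrow> real) \<Rightarrow> ('n::finite \<Rightarrow> complex^'m^'n)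
                 \<Rightarrow> real \<Rightarrow> real^'n \<Rightarrow> real^'n \<Rightarrow> 'n \<Rightarrow> complex^'m" where
  "post_mean f s \<Psi> \<sigma> \<theta> y n = (\<integral>W. post_density f s \<Psi> \<sigma> \<theta> y W *\<^sub>R (W$n) \<partial>lborel)"

definition EM_Q :: "(real \<Rightarrow> real \<Rightarrow> complex) \<Rightarrow> ('m::finite \<Rightarrow> real) \<Rightarrow> ('n::finite \<Rightarrow> complex^'m^'n)
                 \<Rightarrow> real \<Rightarrow> real^'n \<Rightarrow> real^'n \<Rightarrow> real^'n \<Rightarrow> real" where
  "EM_Q f s \<Psi> \<sigma> y thold \<theta> =
     (\<integral>W. post_density f s \<Psi> \<sigma> thold y W * ln (joint_density f s \<Psi> \<sigma> \<theta> y W) \<partial>lborel)"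

end

theory Submission
  imports Defs
begin


lemma lborel_integral_translate:
  fixes f :: "'a::euclidean_space \<Rightarrow> 'b::{banach, second_countable_topology}"
  assumes [measurable]: "f \<in> borel_measurable borel"
  shows "(\<integral>x. f (c + x) \<partial>lborel) = (\<integral>x. f x \<partial>lborel)"
proof -
  have "(\<integral>x. f x \<partial>lborel) = (\<integral>x. f x \<partial>distr lborel borel ((+) c))"
    by (simp add: lborel_distr_plus)
  also have "\<dots> = (\<integral>x. f (c + x) \<partial>lborel)"
    by (rule integral_distr) auto
  finally show ?thesis by simp
qed

lemma lborel_integrable_translate:
  fixes f :: "'a::euclidean_space \<Rightarrow> 'b::{banach, second_countable_topology}"
  assumes [measurable]: "f \<in> borel_measurable borel"
  shows "integrable lborel (\<lambda>x. f (c + x)) \<longleftrightarrow> integrable lborel f"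
proof -
  have "integrable lborel f \<longleftrightarrow> integrable (distr lborel borel ((+) c)) f"
    by (simp add: lborel_distr_plus)
  also have "\<dots> \<longleftrightarrow> integrable lborel (\<lambda>x. f (c + x))"
    by (rule integrable_distr_eq) auto
  finally show ?thesis by simp
qed

lemma lborel_distr_uminus_eucl: "distr lborel borel uminus = (lborel :: 'a::euclidean_space measure)"
proof -
  show ?thesis using lborel_affine[of "-1::real" "0::'a"]
    by (simp add: density_1 cong: distr_cong)
qed

lemma lborel_integral_uminus:
  fixes f :: "'a::euclidean_space \<Rightarrow> 'b::{banach, second_countable_topology}"
  assumes [measurable]: "f \<in> borel_measurable borel"
  shows "(\<integral>x. f (- x) \<partial>lborel) = (\<integral>x. f x \<partial>lborel)"
proof -
  have "(\<integral>x. f x \<partial>lborel) = (\<integral>x. f x \<partial>distr lborel borel uminus)"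
    by (simp add: lborel_distr_uminus_eucl)
  also have "\<dots> = (\<integral>x. f (- x) \<partial>lborel)"
    by (rule integral_distr) auto
  finally show ?thesis by simp
qed

lemma nn_integral_exp_quad:
  assumes a: "a > 0"
  shows "(\<integral>\<^sup>+t. ennreal (exp (- a * t\<^sup>2)) \<partial>lborel) = ennreal (sqrt (pi / a))"
proof -
  define \<sigma> where "\<sigma> = sqrt (1 / (2*a))"
  have s2: "\<sigma>\<^sup>2 = 1/(2*a)" using a by (simp add: \<sigma>_def)
  have sp: "\<sigma> > 0" using a by (simp add: \<sigma>_def)
  define K where "K = sqrt (2 * pi * \<sigma>\<^sup>2)"
  have Kp: "K > 0" using sp by (simp add: K_def)
  have eq: "exp (- a * t\<^sup>2) = K * normal_density 0 \<sigma> t" for t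
  proof -
    have "-(t - 0)\<^sup>2/(2*\<sigma>\<^sup>2) = -a*t\<^sup>2" using a by (simp add: s2 field_simps)
    then show ?thesis using Kp unfolding normal_density_def K_def[symmetric] by simp
  qed
  have "(\<integral>\<^sup>+t. ennreal (exp (- a * t\<^sup>2)) \<partial>lborel) = (\<integral>\<^sup>+t. ennreal K * ennreal (normal_density 0 \<sigma> t) \<partial>lborel)"
    using Kp unfolding eq by (simp add: ennreal_mult)
  also have "\<dots> = ennreal K * (\<integral>\<^sup>+t. ennreal (normal_density 0 \<sigma> t) \<partial>lborel)"
    by (rule nn_integral_cmult) auto
  also have "(\<integral>\<^sup>+t. ennreal (normal_density 0 \<sigma> t) \<partial>lborel) = 1"
    using sp by (subst nn_integral_eq_integral) auto
  also have "K = sqrt (pi / a)" using a unfolding K_def s2 by simp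
  finally show ?thesis by simp
qed

lemma integrable_exp_norm_sq:
  assumes a: "a > 0"
  shows "integrable lborel (\<lambda>x::'a::euclidean_space. exp (- a * (norm x)\<^sup>2))"
proof (rule integrableI_nonneg)
  show "(\<lambda>x::'a. exp (- a * (norm x)\<^sup>2)) \<in> borel_measurable lborel" by measurable
  show "AE x in lborel. 0 \<le> exp (- a * (norm x)\<^sup>2)" by simp
  have eq: "exp (- a * (norm x)\<^sup>2) = (\<Prod>b\<in>Basis. exp (- a * (x \<bullet> b)\<^sup>2))" for x :: 'a
  proof -
    have "(norm x)\<^sup>2 = x \<bullet> x" by (simp add: power2_norm_eq_inner)
    also have "\<dots> = (\<Sum>b\<in>Basis. (x \<bullet> b)\<^sup>2)"
      by (subst euclidean_inner) (simp add: power2_eq_square)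
    finally have "(norm x)\<^sup>2 = (\<Sum>b\<in>Basis. (x \<bullet> b)\<^sup>2)" .
    then show ?thesis by (simp add: exp_sum[symmetric] sum_distrib_left sum_negf)
  qed
  have "(\<integral>\<^sup>+x. ennreal (exp (- a * (norm x)\<^sup>2)) \<partial>(lborel::'a measure))
     = (\<integral>\<^sup>+x. (\<Prod>b\<in>Basis. (\<lambda>b t. ennreal (exp (- a * t\<^sup>2))) b (x \<bullet> b)) \<partial>(lborel::'a measure))"
    unfolding eq by (intro nn_integral_cong) (simp add: prod_ennreal)
  also have "\<dots> = (\<Prod>b\<in>(Basis::'a set). (\<integral>\<^sup>+t. ennreal (exp (- a * t\<^sup>2)) \<partial>lborel))"
    by (rule nn_integral_lborel_prod) auto
  also have "\<dots> = (\<Prod>b\<in>(Basis::'a set). ennreal (sqrt (pi / a)))"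
    unfolding nn_integral_exp_quad[OF a] by simp
  also have "\<dots> < \<infinity>" by (simp add: power_less_top_ennreal)
  finally show "(\<integral>\<^sup>+x. ennreal (exp (- a * (norm x)\<^sup>2)) \<partial>(lborel::'a measure)) < \<infinity>" .
qed


lemma abs_exp_sub_one_le: "\<bar>exp (u::real) - 1\<bar> \<le> \<bar>u\<bar> * exp \<bar>u\<bar>"
proof (cases "u \<ge> 0")
  case True
  have "exp (-u) \<ge> 1 - u" using exp_ge_add_one_self[of "-u"] by simp
  then have "exp u * exp (-u) \<ge> exp u * (1 - u)" by (intro mult_left_mono) auto
  then have "1 \<ge> exp u - u * exp u" by (simp add: exp_minus algebra_simps)
  moreover have "exp u \<ge> 1" using True by simp
  ultimately show ?thesis using True by simp
next
  case False
  have "exp u \<ge> 1 + u" using exp_ge_add_one_self[of u] by simp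
  moreover have "exp u \<le> 1" using False by simp
  moreover have "exp \<bar>u\<bar> \<ge> 1" by simp
  moreover have "-u * 1 \<le> -u * exp \<bar>u\<bar>" using False \<open>exp \<bar>u\<bar> \<ge> 1\<close>
    by (intro mult_left_mono) auto
  moreover have "\<bar>exp u - 1\<bar> = 1 - exp u" using \<open>exp u \<le> 1\<close> by simp
  moreover have "\<bar>u\<bar> = -u" using False by simp
  ultimately show ?thesis by (simp only:)
qed

lemma exp_quot_tendsto:
  "((\<lambda>k. (exp (2 * inverse (real (Suc k)) * b) - 1) / (2 * inverse (real (Suc k)))) \<longlongrightarrow> b) sequentially"
proof (cases "b = 0")
  case True then show ?thesis by simp
next
  case False
  define u where "u k = 2 * inverse (real (Suc k)) * b" for k
  have u0: "u \<longlonglongrightarrow> 0"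
    unfolding u_def using tendsto_mult[OF tendsto_mult[OF tendsto_const[of 2] LIMSEQ_inverse_real_of_nat] tendsto_const[of b]]
    by simp
  have "filterlim u (at 0) sequentially"
    unfolding filterlim_at using u0 False by (auto simp: u_def)
  moreover have "((\<lambda>y. (exp y - 1) / y) \<longlongrightarrow> 1) (at (0::real))"
    using DERIV_exp[of 0] unfolding has_field_derivative_iff by simp
  ultimately have "((\<lambda>k. (exp (u k) - 1) / u k) \<longlongrightarrow> 1) sequentially"
    by (rule filterlim_compose[of "\<lambda>y. (exp y - 1) / y", rotated])
  then have "((\<lambda>k. b * ((exp (u k) - 1) / u k)) \<longlongrightarrow> b * 1) sequentially"
    by (intro tendsto_mult tendsto_const)
  moreover have "b * ((exp (u k) - 1) / u k) = (exp (2 * inverse (real (Suc k)) * b) - 1) / (2 * inverse (real (Suc k)))" for k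
    using False by (simp add: u_def field_simps)
  ultimately show ?thesis by simp
qed

lemma poly_exp_bound:
  assumes c: "c > 0"
  shows "exp (- c * r\<^sup>2) * (1 + r)\<^sup>2 \<le> (2 + 4 / c) * exp (- (c/2) * (r::real)\<^sup>2)"
proof -
  have "(1 + r)\<^sup>2 \<le> 2 + 2 * r\<^sup>2" using zero_le_square[of "r - 1"] by (simp add: power2_eq_square algebra_simps)
  also have "\<dots> \<le> (2 + 4 / c) * (1 + (c/2) * r\<^sup>2)"
  proof -
    have "(2 + 4 / c) * (1 + (c/2) * r\<^sup>2) = 2 + 2 * r\<^sup>2 + (4/c + c * r\<^sup>2)"
      using c by (simp add: field_simps)
    moreover have "4/c + c * r\<^sup>2 \<ge> 0" using c by simp
    ultimately show ?thesis by linarith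
  qed
  also have "\<dots> \<le> (2 + 4 / c) * exp ((c/2) * r\<^sup>2)"
    using c by (intro mult_left_mono exp_ge_add_one_self) auto
  finally have "(1 + r)\<^sup>2 \<le> (2 + 4 / c) * exp ((c/2) * r\<^sup>2)" .
  then have "exp (- c * r\<^sup>2) * (1 + r)\<^sup>2 \<le> exp (- c * r\<^sup>2) * ((2 + 4 / c) * exp ((c/2) * r\<^sup>2))"
    by (intro mult_left_mono) auto
  also have "\<dots> = (2 + 4 / c) * (exp (- c * r\<^sup>2) * exp ((c/2) * r\<^sup>2))"
    by simp
  also have "exp (- c * r\<^sup>2) * exp ((c/2) * r\<^sup>2) = exp (- (c/2) * r\<^sup>2)"
    by (simp add: mult_exp_exp)
  finally show ?thesis .
qed

locale gauss =
  fixes B :: "'v::euclidean_space \<Rightarrow> 'v \<Rightarrow> real"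
  assumes bil: "bilinear B" and symB: "\<And>x y. B x y = B y x" and posB: "\<And>x. x \<noteq> 0 \<Longrightarrow> B x x > 0"
begin

lemma bB: "bounded_bilinear B" using bil bilinear_conv_bounded_bilinear by blast

lemmas B_add_left = bounded_bilinear.add_left[OF bB]
lemmas B_add_right = bounded_bilinear.add_right[OF bB]
lemmas B_diff_left = bounded_bilinear.diff_left[OF bB]
lemmas B_diff_right = bounded_bilinear.diff_right[OF bB]
lemmas B_minus_left = bounded_bilinear.minus_left[OF bB]
lemmas B_minus_right = bounded_bilinear.minus_right[OF bB]
lemmas B_scaleR_left = bounded_bilinear.scaleR_left[OF bB]
lemmas B_scaleR_right = bounded_bilinear.scaleR_right[OF bB]
lemmas B_zero_left = bounded_bilinear.zero_left[OF bB]
lemmas B_zero_right = bounded_bilinear.zero_right[OF bB]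

lemma contB:
  fixes f h :: "'d::t2_space \<Rightarrow> 'v"
  assumes "continuous_on S f" "continuous_on S h"
  shows "continuous_on S (\<lambda>x. B (f x) (h x))"
  using bilinear_continuous_on_compose[OF assms bil] .

lemma coercive: "\<exists>c>0. \<forall>x. c * (norm x)\<^sup>2 \<le> B x x"
proof -
  obtain b :: 'v where b: "b \<in> Basis" using nonempty_Basis by blast
  have "sphere (0::'v) 1 \<noteq> {}" using b by (auto intro!: exI[of _ b])
  moreover have "continuous_on (sphere 0 1) (\<lambda>x. B x x)"
    by (intro contB continuous_on_id)
  ultimately obtain x0 where x0: "x0 \<in> sphere 0 1" and m: "\<forall>y\<in>sphere 0 1. B x0 x0 \<le> B y y"
    using continuous_attains_inf[OF compact_sphere] by blast
  have x00: "x0 \<noteq> 0" using x0 by auto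
  have cpos: "B x0 x0 > 0" using posB[OF x00] .
  have "B x0 x0 * (norm x)\<^sup>2 \<le> B x x" for x
  proof (cases "x = 0")
    case True then show ?thesis by (simp add: B_zero_left)
  next
    case False
    define y where "y = x /\<^sub>R norm x"
    have y: "y \<in> sphere 0 1" using False by (simp add: y_def)
    have xy: "x = norm x *\<^sub>R y" using False by (simp add: y_def)
    have "B x x = (norm x)\<^sup>2 * B y y"
      by (subst xy, subst xy) (simp add: B_scaleR_left B_scaleR_right power2_eq_square)
    have "B x0 x0 \<le> B y y" using m y by auto
    then have "B x0 x0 * (norm x)\<^sup>2 \<le> B y y * (norm x)\<^sup>2" by (rule mult_right_mono) simp
    with \<open>B x x = _\<close> show ?thesis by (simp add: mult.commute)
  qed
  then show ?thesis using cpos by blast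
qed

definition cB where "cB = (SOME c. c > 0 \<and> (\<forall>x. c * (norm x)\<^sup>2 \<le> B x x))"

lemma cB: "cB > 0" "cB * (norm x)\<^sup>2 \<le> B x x"
  using someI_ex[OF coercive[unfolded Ex_def[symmetric]]] unfolding cB_def[symmetric] by auto

definition g where "g x = exp (- B x x)"

lemma g_pos: "g x > 0" by (simp add: g_def)

lemma g_meas[measurable]: "g \<in> borel_measurable borel"
  unfolding g_def[abs_def] by (intro borel_measurable_continuous_onI continuous_intros contB continuous_on_id)

lemma g_minus: "g (- x) = g x" by (simp add: g_def B_minus_left B_minus_right)

lemma g_bound: "g x \<le> exp (- cB * (norm x)\<^sup>2)"
  unfolding g_def using cB(2)[of x] by simp

lemma integrable_g_poly: "integrable lborel (\<lambda>x. g x * (1 + norm x)\<^sup>2)"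
proof (rule Bochner_Integration.integrable_bound)
  show "integrable lborel (\<lambda>x::'v. (2 + 4 / cB) * exp (- (cB/2) * (norm x)\<^sup>2))"
    using cB(1) by (intro integrable_mult_right integrable_exp_norm_sq) simp
  show "(\<lambda>x. g x * (1 + norm x)\<^sup>2) \<in> borel_measurable lborel" by measurable
  show "AE x in lborel. norm (g x * (1 + norm x)\<^sup>2) \<le> norm ((2 + 4 / cB) * exp (- (cB/2) * (norm x)\<^sup>2))"
  proof (intro AE_I2)
    fix x :: 'v
    have "g x * (1 + norm x)\<^sup>2 \<le> exp (- cB * (norm x)\<^sup>2) * (1 + norm x)\<^sup>2"
      using g_bound by (intro mult_right_mono) auto
    also have "\<dots> \<le> (2 + 4 / cB) * exp (- (cB/2) * (norm x)\<^sup>2)"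
      using poly_exp_bound[OF cB(1)] .
    finally show "norm (g x * (1 + norm x)\<^sup>2) \<le> norm ((2 + 4 / cB) * exp (- (cB/2) * (norm x)\<^sup>2))"
      using g_pos[of x] cB(1) by simp
  qed
qed

lemma integrable_g_shift_poly: "integrable lborel (\<lambda>x. g (x - u) * (1 + norm x)\<^sup>2)"
proof -
  have m: "(\<lambda>x. g (x - u) * (1 + norm x)\<^sup>2) \<in> borel_measurable borel" by measurable
  have "integrable lborel (\<lambda>x. g (u + x - u) * (1 + norm (u + x))\<^sup>2)"
  proof (rule Bochner_Integration.integrable_bound)
    show "integrable lborel (\<lambda>x. (1 + norm u)\<^sup>2 * (g x * (1 + norm x)\<^sup>2))"
      by (intro integrable_mult_right integrable_g_poly)
    show "(\<lambda>x. g (u + x - u) * (1 + norm (u + x))\<^sup>2) \<in> borel_measurable lborel" by measurable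
    show "AE x in lborel. norm (g (u + x - u) * (1 + norm (u + x))\<^sup>2) \<le> norm ((1 + norm u)\<^sup>2 * (g x * (1 + norm x)\<^sup>2))"
    proof (intro AE_I2)
      fix x
      have "1 + norm (u + x) \<le> 1 + norm u + norm x + norm u * norm x"
        using norm_triangle_ineq[of u x] mult_nonneg_nonneg[OF norm_ge_zero norm_ge_zero, of u x]
        by linarith
      also have "\<dots> = (1 + norm u) * (1 + norm x)" by (simp add: algebra_simps)
      finally have "1 + norm (u + x) \<le> (1 + norm u) * (1 + norm x)" .
      then have "(1 + norm (u + x))\<^sup>2 \<le> ((1 + norm u) * (1 + norm x))\<^sup>2"
        by (intro power_mono) auto
      then have "g x * (1 + norm (u + x))\<^sup>2 \<le> g x * ((1 + norm u) * (1 + norm x))\<^sup>2"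
        using g_pos[of x] by (intro mult_left_mono) auto
      then show "norm (g (u + x - u) * (1 + norm (u + x))\<^sup>2) \<le> norm ((1 + norm u)\<^sup>2 * (g x * (1 + norm x)\<^sup>2))"
        using g_pos[of x] by (simp add: power_mult_distrib mult_ac)
    qed
  qed
  then show ?thesis using lborel_integrable_translate[OF m, of u] by simp
qed

lemma integrable_g_shift_bound:
  fixes h :: "'v \<Rightarrow> 'b::{banach, second_countable_topology}"
  assumes [measurable]: "h \<in> borel_measurable borel" and hb: "\<And>x. norm (h x) \<le> K * (1 + norm x)\<^sup>2"
  shows "integrable lborel (\<lambda>x. g (x - u) *\<^sub>R h x)"
proof (rule Bochner_Integration.integrable_bound)
  show "integrable lborel (\<lambda>x. K * (g (x - u) * (1 + norm x)\<^sup>2))"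
    by (intro integrable_mult_right integrable_g_shift_poly)
  show "(\<lambda>x. g (x - u) *\<^sub>R h x) \<in> borel_measurable lborel" by measurable
  show "AE x in lborel. norm (g (x - u) *\<^sub>R h x) \<le> norm (K * (g (x - u) * (1 + norm x)\<^sup>2))"
  proof (intro AE_I2)
    fix x
    have "g (x - u) * norm (h x) \<le> g (x - u) * (K * (1 + norm x)\<^sup>2)"
      using g_pos[of "x - u"] hb[of x] by (intro mult_left_mono) auto
    moreover have "K \<ge> 0"
    proof -
      have "0 \<le> K * (1 + norm x)\<^sup>2" using hb[of x] norm_ge_zero order_trans by blast
      moreover have "(1 + norm x)\<^sup>2 > 0" by (smt (verit) norm_ge_zero zero_less_power)
      ultimately show ?thesis by (simp add: zero_le_mult_iff)
    qed
    ultimately show "norm (g (x - u) *\<^sub>R h x) \<le> norm (K * (g (x - u) * (1 + norm x)\<^sup>2))"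
      using g_pos[of "x - u"] by (simp add: abs_mult mult_ac)
  qed
qed

lemma integrable_g_shift_bound_real:
  fixes h :: "'v \<Rightarrow> real"
  assumes [measurable]: "h \<in> borel_measurable borel" and hb: "\<And>x. \<bar>h x\<bar> \<le> K * (1 + norm x)\<^sup>2"
  shows "integrable lborel (\<lambda>x. g (x - u) * h x)"
  using integrable_g_shift_bound[of h K u] assms by simp

definition Z where "Z = (\<integral>x. g x \<partial>lborel)"

lemma integrable_g: "integrable lborel g"
proof -
  have "integrable lborel (\<lambda>x. g (x - 0) * 1)"
  proof (rule integrable_g_shift_bound_real[where K=1])
    fix x :: 'v
    have "1 * 1 \<le> (1 + norm x) * (1 + norm x)" by (intro mult_mono) auto
    then have "1 \<le> (1 + norm x)\<^sup>2" by (simp add: power2_eq_square)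
    then show "\<bar>1\<bar> \<le> 1 * (1 + norm x)\<^sup>2" by simp
  qed simp
  then show ?thesis by simp
qed

lemma Z_pos: "Z > 0"
proof -
  have "Z \<ge> 0" unfolding Z_def using g_pos by (intro integral_nonneg_AE) (simp add: less_imp_le)
  moreover have "Z \<noteq> 0"
  proof
    assume "Z = 0"
    then have "AE x in lborel. g x = 0"
      unfolding Z_def using integral_nonneg_eq_0_iff_AE[OF integrable_g] g_pos by (simp add: less_imp_le)
    then have "AE x in (lborel::'v measure). False" by (rule AE_mp) (auto intro!: AE_I2 simp: g_def)
    then have "ae_filter (lborel::'v measure) = bot" using trivial_limit_def by blast
    then have "emeasure (lborel::'v measure) (space lborel) = 0" by (simp add: ae_filter_eq_bot_iff)
    then show False by simp
  qed
  ultimately show ?thesis by simp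
qed

end


lemma linear_bound_sq:
  fixes L :: "'a::euclidean_space \<Rightarrow> 'b::real_normed_vector"
  assumes "linear L"
  shows "\<exists>K. \<forall>x. norm (L x) \<le> K * (1 + norm x)\<^sup>2"
proof -
  have "bounded_linear L" using assms linear_conv_bounded_linear by blast
  then obtain K where K: "K > 0" "\<And>x. norm (L x) \<le> norm x * K"
    using bounded_linear.pos_bounded by blast
  have "norm (L x) \<le> K * (1 + norm x)\<^sup>2" for x
  proof -
    have "0 \<le> norm x * norm x" by simp
    then have "norm x \<le> (1 + norm x) * (1 + norm x)"
      by (simp add: algebra_simps)
    then have "norm x * K \<le> K * (1 + norm x)\<^sup>2" using K(1) by (simp add: power2_eq_square mult.commute)
    then show ?thesis using K(2)[of x] by linarith
  qed
  then show ?thesis by blast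
qed

lemma linear_meas:
  fixes L :: "'a::euclidean_space \<Rightarrow> 'b::{real_normed_vector, second_countable_topology}"
  assumes "linear L"
  shows "L \<in> borel_measurable borel"
  using assms linear_conv_bounded_linear linear_continuous_on borel_measurable_continuous_onI by blast

context gauss
begin

lemma integrable_g_lin:
  fixes L :: "'v \<Rightarrow> 'b::{banach, second_countable_topology}"
  assumes "linear L"
  shows "integrable lborel (\<lambda>x. g (x - u) *\<^sub>R L x)"
proof -
  obtain K where "\<And>x. norm (L x) \<le> K * (1 + norm x)\<^sup>2" using linear_bound_sq[OF assms] by blast
  then show ?thesis using linear_meas[OF assms] by (intro integrable_g_shift_bound) auto
qed

lemma mean_zero:
  fixes L :: "'v \<Rightarrow> 'b::{banach, second_countable_topology}"
  assumes L: "linear L"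
  shows "(\<integral>x. g x *\<^sub>R L x \<partial>lborel) = 0"
proof -
  note [measurable] = linear_meas[OF L]
  define I where "I = (\<integral>x. g x *\<^sub>R L x \<partial>lborel)"
  have "I = (\<integral>x. g (- x) *\<^sub>R L (- x) \<partial>lborel)"
    unfolding I_def by (rule lborel_integral_uminus[symmetric]) measurable
  also have "\<dots> = (\<integral>x. - (g x *\<^sub>R L x) \<partial>lborel)"
    by (simp add: g_minus linear_neg[OF L])
  also have "\<dots> = - I" unfolding I_def by (rule Bochner_Integration.integral_minus)
  finally have "I = - I" .
  then have "I + I = 0" using eq_neg_iff_add_eq_0 by blast
  then have "(2::real) *\<^sub>R I = 0" by (simp add: scaleR_2)
  then show ?thesis unfolding I_def by simp
qed

lemma mean_zero_real:
  assumes L: "linear (L :: 'v \<Rightarrow> real)"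
  shows "(\<integral>x. g x * L x \<partial>lborel) = 0"
  using mean_zero[OF L] by simp

lemma integrable_g_lin_real:
  assumes "linear (L :: 'v \<Rightarrow> real)"
  shows "integrable lborel (\<lambda>x. g (x - u) * L x)"
  using integrable_g_lin[OF assms, of u] by simp

lemma g_exp_shift: "g x * exp (2 * B x w) = exp (B w w) * g (x - w)"
proof -
  have "B (x - w) (x - w) = B x x - 2 * B x w + B w w"
    by (simp add: B_diff_left B_diff_right symB[of w x])
  then show ?thesis by (simp add: g_def mult_exp_exp)
qed

lemma integrable_g_shift_lin:
  assumes "linear (L :: 'v \<Rightarrow> real)"
  shows "integrable lborel (\<lambda>x. g (x - u) * L x)"
  using integrable_g_lin_real[OF assms] .

lemma integrable_g_shift: "integrable lborel (\<lambda>x. g (x - u))"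
proof -
  have "integrable lborel (\<lambda>x. g (x - u) * 1)"
  proof (rule integrable_g_shift_bound_real[where K=1])
    fix x :: 'v
    have "1 * 1 \<le> (1 + norm x) * (1 + norm x)" by (intro mult_mono) auto
    then show "\<bar>1\<bar> \<le> 1 * (1 + norm x)\<^sup>2" by (simp add: power2_eq_square)
  qed simp
  then show ?thesis by simp
qed

lemma mgf_lin:
  assumes L: "linear (\<phi> :: 'v \<Rightarrow> real)"
  shows "(\<integral>x. g x * exp (2 * B x w) * \<phi> x \<partial>lborel) = exp (B w w) * \<phi> w * Z"
proof -
  note [measurable] = linear_meas[OF L]
  have "(\<integral>x. g x * exp (2 * B x w) * \<phi> x \<partial>lborel) = (\<integral>x. exp (B w w) * (g (x - w) * \<phi> x) \<partial>lborel)"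
    by (intro Bochner_Integration.integral_cong) (simp_all add: g_exp_shift)
  also have "\<dots> = exp (B w w) * (\<integral>x. g (x - w) * \<phi> x \<partial>lborel)" by simp
  also have "(\<integral>x. g (x - w) * \<phi> x \<partial>lborel) = (\<integral>x. g (w + x - w) * \<phi> (w + x) \<partial>lborel)"
    by (rule lborel_integral_translate[symmetric]) measurable
  also have "\<dots> = (\<integral>x. \<phi> w * g x + g x * \<phi> x \<partial>lborel)"
    by (intro Bochner_Integration.integral_cong) (simp_all add: linear_add[OF L] algebra_simps)
  also have "\<dots> = \<phi> w * Z + 0"
    unfolding Z_def
    by (subst Bochner_Integration.integral_add)
       (auto intro!: integrable_g integrable_g_lin_real[OF L, of 0, simplified] simp: mean_zero_real[OF L])
  finally show ?thesis by simp
qed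

end


lemma linear_bound_lin:
  fixes L :: "'a::euclidean_space \<Rightarrow> 'b::real_normed_vector"
  assumes "linear L"
  shows "\<exists>K>0. \<forall>x. norm (L x) \<le> norm x * K"
  using assms linear_conv_bounded_linear bounded_linear.pos_bounded by blast

context gauss
begin

lemma B_bound: "\<exists>K>0. \<forall>a b. \<bar>B a b\<bar> \<le> norm a * norm b * K"
  using bounded_bilinear.pos_bounded[OF bB] by simp

lemma B_meas[measurable]: "(\<lambda>x. B x v) \<in> borel_measurable borel"
  by (intro borel_measurable_continuous_onI contB continuous_on_id continuous_on_const)

lemma stein:
  assumes L: "linear (\<phi> :: 'v \<Rightarrow> real)"
  shows "(\<integral>x. g x * B x v * \<phi> x \<partial>lborel) = \<phi> v * Z / 2"
proof -
  note [measurable] = linear_meas[OF L]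
  define t where "t k = inverse (real (Suc k))" for k
  have tpos: "t k > 0" for k by (simp add: t_def)
  have tle: "t k \<le> 1" for k unfolding t_def by (simp add: inverse_le_1_iff)
  define s where "s k x = g x * \<phi> x * ((exp (2 * t k * B x v) - 1) / (2 * t k))" for k x
  define f where "f x = g x * B x v * \<phi> x" for x
  obtain K1 where K1: "K1 > 0" "\<And>x. norm (\<phi> x) \<le> norm x * K1" using linear_bound_lin[OF L] by blast
  obtain K2 where K2: "K2 > 0" "\<And>a b. \<bar>B a b\<bar> \<le> norm a * norm b * K2" using B_bound by blast
  define h where "h x = \<bar>\<phi> x\<bar> * \<bar>B x v\<bar>" for x
  have h_meas[measurable]: "h \<in> borel_measurable borel" unfolding h_def[abs_def] by measurable
  have hb: "\<bar>h x\<bar> \<le> (K1 * norm v * K2) * (1 + norm x)\<^sup>2" for x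
  proof -
    have b2: "\<bar>B x v\<bar> \<le> norm x * (norm v * K2)" using K2(2)[of x v] by (simp add: mult_ac)
    have b1: "\<bar>\<phi> x\<bar> \<le> norm x * K1" using K1(2)[of x] by simp
    have "h x \<le> (norm x * K1) * (norm x * (norm v * K2))"
      unfolding h_def using K1(1) by (intro mult_mono b1 b2) auto
    also have "\<dots> = (K1 * norm v * K2) * (norm x * norm x)" by (simp add: mult_ac)
    also have "\<dots> \<le> (K1 * norm v * K2) * (1 + norm x)\<^sup>2"
    proof (intro mult_left_mono)
      have "0 \<le> norm x" by simp
      then show "norm x * norm x \<le> (1 + norm x)\<^sup>2" by (simp add: power2_eq_square algebra_simps)
    qed (use K1 K2 in simp)
    finally show ?thesis by (simp add: h_def)
  qed
  define W where "W x = exp (B v v) * (g (x - v) * h x + g (x - (- v)) * h x)" for x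
  have W_int: "integrable lborel W"
    unfolding W_def
    by (intro integrable_mult_right Bochner_Integration.integrable_add
          integrable_g_shift_bound_real[OF h_meas hb])
  have bound: "norm (s k x) \<le> W x" for k x
  proof -
    define b where "b = B x v"
    have "\<bar>exp (2 * t k * b) - 1\<bar> \<le> \<bar>2 * t k * b\<bar> * exp \<bar>2 * t k * b\<bar>"
      by (rule abs_exp_sub_one_le)
    also have "\<dots> \<le> (2 * t k * \<bar>b\<bar>) * exp (2 * \<bar>b\<bar>)"
    proof (intro mult_mono)
      show "\<bar>2 * t k * b\<bar> \<le> 2 * t k * \<bar>b\<bar>" using tpos[of k] by (simp add: abs_mult)
      have "\<bar>2 * t k * b\<bar> \<le> 2 * \<bar>b\<bar>" using tpos[of k] tle[of k]
        by (simp add: abs_mult mult_left_le_one_le)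
      then show "exp \<bar>2 * t k * b\<bar> \<le> exp (2 * \<bar>b\<bar>)" by simp
    qed (use tpos[of k] in auto)
    finally have e1: "\<bar>(exp (2 * t k * b) - 1) / (2 * t k)\<bar> \<le> \<bar>b\<bar> * exp (2 * \<bar>b\<bar>)"
      using tpos[of k] by (simp add: divide_le_eq abs_divide mult_ac)
    have e2: "exp (2 * \<bar>b\<bar>) \<le> exp (2 * b) + exp (2 * B x (- v))"
      by (cases "b \<ge> 0") (auto simp: B_minus_right b_def add_increasing add_increasing2)
    have "norm (s k x) = g x * \<bar>\<phi> x\<bar> * \<bar>(exp (2 * t k * b) - 1) / (2 * t k)\<bar>"
      unfolding s_def b_def using g_pos[of x] by (simp add: abs_mult)
    also have "\<dots> \<le> g x * \<bar>\<phi> x\<bar> * (\<bar>b\<bar> * exp (2 * \<bar>b\<bar>))"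
      using g_pos[of x] by (intro mult_left_mono e1) auto
    also have "\<dots> \<le> g x * \<bar>\<phi> x\<bar> * (\<bar>b\<bar> * (exp (2 * b) + exp (2 * B x (- v))))"
      using g_pos[of x] by (intro mult_left_mono e2) auto
    also have "\<dots> = h x * (g x * exp (2 * B x v) + g x * exp (2 * B x (- v)))"
      by (simp add: h_def b_def algebra_simps)
    also have "\<dots> = W x"
      unfolding g_exp_shift W_def by (simp add: B_minus_left B_minus_right algebra_simps)
    finally show ?thesis .
  qed
  have lim: "(\<lambda>k. s k x) \<longlonglongrightarrow> f x" for x
  proof -
    have "(\<lambda>k. g x * \<phi> x * ((exp (2 * t k * B x v) - 1) / (2 * t k))) \<longlonglongrightarrow> g x * \<phi> x * B x v"
      unfolding t_def by (intro tendsto_mult_left exp_quot_tendsto)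
    then show ?thesis unfolding s_def f_def by (simp add: mult_ac)
  qed
  have f_meas[measurable]: "f \<in> borel_measurable borel" unfolding f_def[abs_def] by measurable
  have s_meas[measurable]: "s k \<in> borel_measurable borel" for k unfolding s_def[abs_def] by measurable
  have dct: "(\<lambda>k. integral\<^sup>L lborel (s k)) \<longlonglongrightarrow> integral\<^sup>L lborel f"
    by (rule integral_dominated_convergence[where w=W]) (use bound[unfolded real_norm_def] in \<open>auto simp: W_int lim\<close>)
  have int_s: "integral\<^sup>L lborel (s k) = exp ((t k)\<^sup>2 * B v v) * (\<phi> v * Z / 2)" for k
  proof -
    define w where "w = t k *\<^sub>R v"
    have i1: "integrable lborel (\<lambda>x. g x * exp (2 * B x w) * \<phi> x)"
    proof -
      have "integrable lborel (\<lambda>x. exp (B w w) * (g (x - w) * \<phi> x))"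
        by (intro integrable_mult_right integrable_g_lin_real[OF L])
      moreover have "(\<lambda>x. g x * exp (2 * B x w) * \<phi> x) = (\<lambda>x. exp (B w w) * (g (x - w) * \<phi> x))"
        by (simp add: fun_eq_iff g_exp_shift)
      ultimately show ?thesis by simp
    qed
    have i2: "integrable lborel (\<lambda>x. g x * \<phi> x)"
      using integrable_g_lin_real[OF L, of 0] by simp
    have "integral\<^sup>L lborel (s k) = (\<integral>x. (1 / (2 * t k)) * (g x * exp (2 * B x w) * \<phi> x) - (1 / (2 * t k)) * (g x * \<phi> x) \<partial>lborel)"
      unfolding s_def w_def using tpos[of k]
      by (intro Bochner_Integration.integral_cong) (simp_all add: B_scaleR_right field_simps)
    also have "\<dots> = (1 / (2 * t k)) * (\<integral>x. g x * exp (2 * B x w) * \<phi> x \<partial>lborel) - (1 / (2 * t k)) * (\<integral>x. g x * \<phi> x \<partial>lborel)"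
      using i1 i2 by simp
    also have "\<dots> = (1 / (2 * t k)) * (exp (B w w) * \<phi> w * Z)"
      by (simp add: mgf_lin[OF L] mean_zero_real[OF L])
    also have "\<dots> = exp ((t k)\<^sup>2 * B v v) * (\<phi> v * Z / 2)"
      unfolding w_def using tpos[of k]
      by (simp add: B_scaleR_left B_scaleR_right linear_scale[OF L] power2_eq_square field_simps)
    finally show ?thesis .
  qed
  have "(\<lambda>k. exp ((t k)\<^sup>2 * B v v) * (\<phi> v * Z / 2)) \<longlonglongrightarrow> exp (0\<^sup>2 * B v v) * (\<phi> v * Z / 2)"
    unfolding t_def by (intro tendsto_intros LIMSEQ_inverse_real_of_nat)
  then have "(\<lambda>k. integral\<^sup>L lborel (s k)) \<longlonglongrightarrow> \<phi> v * Z / 2" by (simp add: int_s)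
  with dct have "integral\<^sup>L lborel f = \<phi> v * Z / 2" using LIMSEQ_unique by blast
  then show ?thesis unfolding f_def by simp
qed

end


lemma matrix_inv_facts:
  fixes A :: "'a::semiring_1^'n^'m"
  assumes "invertible A"
  shows "A ** matrix_inv A = mat 1" "matrix_inv A ** A = mat 1"
proof -
  have "\<exists>A'. A ** A' = mat 1 \<and> A' ** A = mat 1" using assms unfolding invertible_def by blast
  from someI_ex[OF this] show "A ** matrix_inv A = mat 1" "matrix_inv A ** A = mat 1"
    unfolding matrix_inv_def by auto
qed

lemma invertible_if_inj:
  fixes A :: "'a::field^'n^'n"
  assumes "inj ((*v) A)"
  shows "invertible A"
proof -
  obtain B where "B ** A = mat 1" using assms matrix_left_invertible_injective by blast
  moreover then have "A ** B = mat 1" using matrix_left_right_inverse by blast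
  ultimately show ?thesis unfolding invertible_def by blast
qed

lemma adj_nth[simp]: "adj A $ i $ j = cnj (A $ j $ i)"
  by (simp add: adj_def)

lemma adj_adj[simp]: "adj (adj A) = A"
  by (simp add: vec_eq_iff)

lemma adj_mult: "adj (A ** B) = adj B ** adj A"
  by (simp add: vec_eq_iff matrix_matrix_mult_def mult.commute)

lemma adj_mat1[simp]: "adj (mat 1 :: complex^'n^'n) = mat 1"
  by (simp add: vec_eq_iff mat_def)

lemma herm_inv:
  fixes M :: "complex^'n^'n"
  assumes h: "adj M = M" and inv: "invertible M"
  shows "adj (matrix_inv M) = matrix_inv M"
proof -
  note mi = matrix_inv_facts[OF inv]
  have "adj (matrix_inv M) ** M = mat 1"
    using arg_cong[OF mi(1), of adj] by (simp add: adj_mult h)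
  then have "adj (matrix_inv M) = adj (matrix_inv M) ** (M ** matrix_inv M)"
    using mi by simp
  also have "\<dots> = matrix_inv M"
    by (simp add: matrix_mul_assoc \<open>adj (matrix_inv M) ** M = mat 1\<close>)
  finally show ?thesis .
qed

lemma sum_distinct_list_UNIV:
  fixes F :: "'a::finite \<Rightarrow> 'b::comm_monoid_add"
  assumes "distinct es" "set es = UNIV"
  shows "(\<Sum>i<length es. F (es ! i)) = (\<Sum>m\<in>UNIV. F m)"
  using sum.reindex_bij_betw[OF bij_betw_nth[OF assms(1) refl assms(2)[symmetric]], of F] by simp

lemma sum_distinct_list_UNIV2:
  fixes K :: "'a::finite \<Rightarrow> 'a \<Rightarrow> 'b::comm_monoid_add"
  assumes "distinct es" "set es = UNIV"
  shows "(\<Sum>i<length es. \<Sum>j<length es. K (es ! i) (es ! j)) = (\<Sum>a\<in>UNIV. \<Sum>b\<in>UNIV. K a b)"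
proof -
  have "(\<Sum>i<length es. \<Sum>j<length es. K (es ! i) (es ! j)) = (\<Sum>i<length es. (\<lambda>a. \<Sum>b\<in>UNIV. K a b) (es ! i))"
  proof (intro sum.cong refl)
    fix i show "(\<Sum>j<length es. K (es ! i) (es ! j)) = (\<lambda>a. \<Sum>b\<in>UNIV. K a b) (es ! i)"
      using sum_distinct_list_UNIV[OF assms, of "K (es ! i)"] by simp
  qed
  also have "\<dots> = (\<Sum>a\<in>UNIV. \<Sum>b\<in>UNIV. K a b)"
    by (rule sum_distinct_list_UNIV[OF assms])
  finally show ?thesis .
qed

definition hb :: "complex^'m^'m \<Rightarrow> complex^'m \<Rightarrow> complex^'m \<Rightarrow> complex" where
  "hb M w v = (\<Sum>i\<in>UNIV. cnj (w$i) * (M *v v)$i)"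

lemma hform_hb: "hform w M = hb M w w"
  by (simp add: hform_def hb_def)

lemma hb_expand: "hb M w v = (\<Sum>i\<in>UNIV. \<Sum>j\<in>UNIV. cnj (w$i) * M$i$j * v$j)"
  by (simp add: hb_def matrix_vector_mult_def sum_distrib_left mult.assoc)

lemma hb_add_left: "hb M (a + b) v = hb M a v + hb M b v"
  by (simp add: hb_def distrib_right sum.distrib)

lemma hb_add_right: "hb M w (a + b) = hb M w a + hb M w b"
  by (simp add: hb_def matrix_vector_right_distrib distrib_left sum.distrib)

lemma cvec_scaleR_nth: "(c *\<^sub>R (a::complex^'m)) $ i = of_real c * a$i"
  by (simp only: vector_scaleR_component) (rule scaleR_conv_of_real)

lemma hb_scaleR_left: "hb M (c *\<^sub>R a) v = of_real c * hb M a v"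
  by (simp add: hb_def cvec_scaleR_nth sum_distrib_left mult_ac del: vector_scaleR_component)

lemma hb_scaleR_right: "hb M w (c *\<^sub>R a) = of_real c * hb M w a"
  by (simp add: hb_expand cvec_scaleR_nth sum_distrib_left mult_ac del: vector_scaleR_component)

lemma hb_minus_left: "hb M (- a) v = - hb M a v"
  by (simp add: hb_def sum_negf)

lemma hb_minus_right: "hb M w (- a) = - hb M w a"
  by (simp add: hb_expand sum_negf)

lemma hb_diff_left: "hb M (a - b) v = hb M a v - hb M b v"
  using hb_add_left[of M a "- b" v] by (simp add: hb_minus_left)

lemma hb_diff_right: "hb M w (a - b) = hb M w a - hb M w b"
  using hb_add_right[of M w a "- b"] by (simp add: hb_minus_right)

lemma hb_zero_left[simp]: "hb M 0 v = 0" by (simp add: hb_def)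
lemma hb_zero_right[simp]: "hb M w 0 = 0" by (simp add: hb_def)

lemma hb_herm_swap:
  assumes "adj M = M"
  shows "hb M v w = cnj (hb M w v)"
proof -
  have Mc: "cnj (M$i$j) = M$j$i" for i j
    using arg_cong[OF assms, of "\<lambda>X. X$j$i"] by simp
  have "cnj (hb M w v) = (\<Sum>i\<in>UNIV. \<Sum>j\<in>UNIV. w$i * cnj (M$i$j) * cnj (v$j))"
    by (simp add: hb_expand)
  also have "\<dots> = (\<Sum>j\<in>UNIV. \<Sum>i\<in>UNIV. cnj (v$j) * M$j$i * w$i)"
    by (subst sum.swap) (simp add: Mc mult_ac)
  also have "\<dots> = hb M v w" by (simp add: hb_expand)
  finally show ?thesis by simp
qed

lemma Re_hb_herm_swap:
  assumes "adj M = M"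
  shows "Re (hb M v w) = Re (hb M w v)"
  using arg_cong[OF hb_herm_swap[OF assms, of v w], of Re] by simp

lemma herm_Cmat:
  assumes "herm_psd_fun f"
  shows "adj (Cmat f s t) = Cmat f s t"
proof -
  have hall: "\<forall>x y. f x y = cnj (f y x)" using assms unfolding herm_psd_fun_def by (rule conjunct1)
  have e: "f b a = cnj (f a b)" for a b using hall by blast
  have "cnj (f a b) = f b a" for a b using e[of b a] by (rule sym)
  then show ?thesis by (simp add: vec_eq_iff Cmat_def)
qed

lemma psd_Cmat:
  fixes s :: "'m::finite \<Rightarrow> real"
  assumes "herm_psd_fun f"
  shows "Re (hb (Cmat f s t) u u) \<ge> 0"
proof -
  obtain es :: "'m list" where es: "set es = UNIV" "distinct es"
    using finite_distinct_list[OF finite[of "UNIV::'m set"]] by blast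
  define xs where "xs = map (\<lambda>m. s m + t) es"
  define c where "c = map (\<lambda>m. u$m) es"
  have "length c = length xs" by (simp add: xs_def c_def)
  then have "0 \<le> Re (\<Sum>i<length xs. \<Sum>j<length xs. cnj (c!i) * c!j * f (xs!i) (xs!j))"
    using conjunct2[OF assms[unfolded herm_psd_fun_def]] by blast
  also have "(\<Sum>i<length xs. \<Sum>j<length xs. cnj (c!i) * c!j * f (xs!i) (xs!j))
      = (\<Sum>i<length es. \<Sum>j<length es. cnj (u$(es!i)) * u$(es!j) * f (s (es!i) + t) (s (es!j) + t))"
    by (simp add: xs_def c_def)
  also have "\<dots> = (\<Sum>a\<in>UNIV. \<Sum>b\<in>UNIV. cnj (u$a) * u$b * f (s a + t) (s b + t))"
    by (rule sum_distinct_list_UNIV2[OF es(2,1), where K="\<lambda>a b. cnj (u$a) * u$b * f (s a + t) (s b + t)"])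
  also have "\<dots> = hb (Cmat f s t) u u"
    by (simp add: hb_expand Cmat_def mult_ac)
  finally show ?thesis .
qed

lemma Re_cnj_mult_self: "Re (cnj z * z) = (cmod z)\<^sup>2"
proof -
  have "Re (cnj z * z) = Re z * Re z + Im z * Im z" by simp
  also have "\<dots> = (Re z)\<^sup>2 + (Im z)\<^sup>2" by (simp add: power2_eq_square)
  also have "\<dots> = (cmod z)\<^sup>2" by (rule cmod_power2[symmetric])
  finally show ?thesis .
qed

lemma hb_self_Mv: "hb M (M *v u) u = (\<Sum>i\<in>UNIV. cnj ((M *v u)$i) * (M *v u)$i)"
  by (simp add: hb_def)

lemma pd_of_psd:
  fixes M :: "complex^'m^'m"
  assumes h: "adj M = M" and inv: "invertible M" and psd: "\<And>u. Re (hb M u u) \<ge> 0"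
    and u: "u \<noteq> 0"
  shows "Re (hb M u u) > 0"
proof (rule ccontr)
  assume "\<not> Re (hb M u u) > 0"
  then have z: "Re (hb M u u) = 0" using psd[of u] by simp
  have a0: "Re (hb M z u) = 0" for z
  proof (rule ccontr)
    define a where "a = Re (hb M z u)"
    define q where "q = Re (hb M z z)"
    assume "Re (hb M z u) \<noteq> 0"
    then have an: "a \<noteq> 0" by (simp add: a_def)
    have q0: "q \<ge> 0" using psd by (simp add: q_def)
    define \<tau> where "\<tau> = - a / (q + 1)"
    have "Re (hb M (u + \<tau> *\<^sub>R z) (u + \<tau> *\<^sub>R z)) = 2 * \<tau> * a + \<tau>\<^sup>2 * q"
      using Re_hb_herm_swap[OF h, of u z] z
      by (simp add: hb_add_left hb_add_right hb_scaleR_left hb_scaleR_right a_def q_def power2_eq_square algebra_simps)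
    also have "\<dots> < 0"
    proof -
      have q1: "q + 1 > 0" using q0 by simp
      have t1: "\<tau> * (q + 1) = - a" unfolding \<tau>_def using q1 by simp
      have "(q + 1)\<^sup>2 * (2 * \<tau> * a + \<tau>\<^sup>2 * q) = 2 * a * (q + 1) * (\<tau> * (q + 1)) + (\<tau> * (q + 1))\<^sup>2 * q"
        by (simp add: power2_eq_square algebra_simps)
      also have "\<dots> = - (a\<^sup>2 * (q + 2))" unfolding t1 by (simp add: power2_eq_square algebra_simps)
      also have "\<dots> < 0" using an q0 by (simp add: mult_pos_pos)
      finally have "(q + 1)\<^sup>2 * (2 * \<tau> * a + \<tau>\<^sup>2 * q) < 0" .
      then show ?thesis using q1 by (simp add: mult_less_0_iff)
    qed
    finally show False using psd[of "u + \<tau> *\<^sub>R z"] by simp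
  qed
  have "Re (hb M (M *v u) u) = (\<Sum>i\<in>UNIV. (cmod ((M *v u)$i))\<^sup>2)"
    unfolding hb_self_Mv Re_sum by (simp only: Re_cnj_mult_self)
  then have "(\<Sum>i\<in>UNIV. (cmod ((M *v u)$i))\<^sup>2) = 0" using a0 by simp
  then have "\<forall>i\<in>UNIV. (cmod ((M *v u)$i))\<^sup>2 = 0"
    by (subst sum_nonneg_eq_0_iff[symmetric]) auto
  then have "M *v u = 0" by (simp add: vec_eq_iff)
  then have "matrix_inv M *v (M *v u) = 0" by simp
  then have "u = 0" by (simp add: matrix_vector_mul_assoc matrix_inv_facts[OF inv])
  with u show False by simp
qed

lemma hb_inv:
  fixes M :: "complex^'m^'m"
  assumes inv: "invertible M"
  shows "hb (matrix_inv M) (M *v u) (M *v u) = cnj (hb M u u)"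
proof -
  have "matrix_inv M *v (M *v u) = u" by (simp add: matrix_vector_mul_assoc matrix_inv_facts[OF inv])
  then have "hb (matrix_inv M) (M *v u) (M *v u) = (\<Sum>i\<in>UNIV. cnj ((M *v u)$i) * u$i)"
    by (simp add: hb_def)
  also have "\<dots> = cnj (hb M u u)" by (simp add: hb_def mult.commute)
  finally show ?thesis .
qed

lemma pd_inv:
  fixes M :: "complex^'m^'m"
  assumes h: "adj M = M" and inv: "invertible M" and psd: "\<And>u. Re (hb M u u) \<ge> 0"
    and w: "w \<noteq> 0"
  shows "Re (hb (matrix_inv M) w w) > 0"
proof -
  define u where "u = matrix_inv M *v w"
  have wu: "w = M *v u" by (simp add: u_def matrix_vector_mul_assoc matrix_inv_facts[OF inv])
  have "u \<noteq> 0" using w wu by auto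
  then have "Re (hb M u u) > 0" by (rule pd_of_psd[OF h inv psd])
  then show ?thesis by (simp add: wu hb_inv[OF inv])
qed


lemma mv_nth: "(M *v x) $ i = (\<Sum>j\<in>UNIV. M$i$j * x$j)"
  by (simp add: matrix_vector_mult_def)

lemma mm_nth: "(A ** B) $ i $ j = (\<Sum>k\<in>UNIV. A$i$k * B$k$j)"
  by (simp add: matrix_matrix_mult_def)

definition sq :: "complex^'m \<Rightarrow> complex^'m \<Rightarrow> complex" where
  "sq w v = (\<Sum>i\<in>UNIV. cnj (w$i) * v$i)"

lemma hb_sq: "hb M w v = sq w (M *v v)"
  by (simp add: hb_def sq_def)

lemma sq_adj: "sq w (Q *v v) = sq (adj Q *v w) v"
proof -
  have "sq w (Q *v v) = (\<Sum>i\<in>UNIV. \<Sum>k\<in>UNIV. cnj (w$i) * Q$i$k * v$k)"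
    by (simp add: sq_def mv_nth sum_distrib_left mult.assoc)
  also have "\<dots> = (\<Sum>k\<in>UNIV. \<Sum>i\<in>UNIV. cnj (w$i) * Q$i$k * v$k)" by (rule sum.swap)
  also have "\<dots> = sq (adj Q *v w) v"
    by (simp add: sq_def mv_nth sum_distrib_right sum_distrib_left mult_ac)
  finally show ?thesis .
qed

lemma sum_mv: "(\<Sum>n\<in>S. M n) *v x = (\<Sum>n\<in>S. M n *v x)"
  by (induction S rule: infinite_finite_induct) (auto simp: matrix_vector_mult_add_rdistrib)

lemma cmv_scaleR: "(Q::complex^'a^'b) *v (c *\<^sub>R v) = c *\<^sub>R (Q *v v)"
  by (simp add: vec_eq_iff mv_nth cvec_scaleR_nth sum_distrib_left mult_ac del: vector_scaleR_component)

lemma Re_mat_mv: "(Re_mat M *v x) $ i = Re ((M *v cplx_vec x) $ i)"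
  by (simp add: Re_mat_def cplx_vec_def mv_nth Re_sum)

lemma Re_sq_real: "Re (sq w (cplx_vec r)) = (\<Sum>j\<in>UNIV. r$j * Re (w$j))"
  by (simp add: sq_def cplx_vec_def Re_sum mult.commute)

locale em =
  fixes \<Psi> :: "'n::finite \<Rightarrow> complex^'m::finite^'n" and \<sigma> :: real
    and f :: "real \<Rightarrow> real \<Rightarrow> complex" and s :: "'m \<Rightarrow> real"
    and y :: "real^'n" and thold :: "real^'n"
  assumes \<sigma>pos: "\<sigma> > 0" and hpsd: "herm_psd_fun f" and invC: "\<And>n. invertible (Cmat f s (thold$n))"
begin

definition "Cn n = Cmat f s (thold$n)"
definition "A n = matrix_inv (Cn n)"
definition SW :: "complex^'m^'n \<Rightarrow> complex^'n" where "SW W = (\<Sum>n\<in>UNIV. \<Psi> n *v W$n)"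
definition "P = (\<Sum>n\<in>UNIV. \<Psi> n ** Cn n ** adj (\<Psi> n))"
definition "Cyt = Cy f s \<Psi> \<sigma> thold"
definition "Cyi = matrix_inv Cyt"
definition "kk = 1 / (2 * \<sigma>\<^sup>2)"
definition RS :: "complex^'m^'n \<Rightarrow> 'n \<Rightarrow> real" where "RS W j = Re (SW W $ j)"
definition Bc :: "complex^'m^'n \<Rightarrow> complex^'m^'n \<Rightarrow> real" where
  "Bc W V = (\<Sum>n\<in>UNIV. Re (hb (A n) (W$n) (V$n))) + kk * (\<Sum>j\<in>UNIV. RS W j * RS V j)"

lemma Cn_herm: "adj (Cn n) = Cn n" by (simp add: Cn_def herm_Cmat[OF hpsd])
lemma Cn_inv: "invertible (Cn n)" by (simp add: Cn_def invC)
lemma Cn_psd: "Re (hb (Cn n) u u) \<ge> 0" by (simp add: Cn_def psd_Cmat[OF hpsd])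
lemma A_herm: "adj (A n) = A n" by (simp add: A_def herm_inv[OF Cn_herm Cn_inv])
lemma A_Cn: "A n ** Cn n = mat 1" by (simp add: A_def matrix_inv_facts[OF Cn_inv])
lemma A_pd: "w \<noteq> 0 \<Longrightarrow> Re (hb (A n) w w) > 0"
  unfolding A_def by (rule pd_inv[OF Cn_herm Cn_inv Cn_psd])
lemma A_psd: "Re (hb (A n) w w) \<ge> 0"
  by (cases "w = 0") (auto dest: A_pd[of _ n] simp: less_imp_le)

lemma kk_pos: "kk > 0" using \<sigma>pos by (simp add: kk_def)
lemma kk_sigma: "kk * \<sigma>\<^sup>2 = 1/2" using \<sigma>pos by (simp add: kk_def)

lemma SW_add: "SW (a + b) = SW a + SW b"
  by (simp add: SW_def matrix_vector_right_distrib sum.distrib)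

lemma SW_scaleR: "SW (c *\<^sub>R a) = c *\<^sub>R SW a"
  by (simp add: SW_def cmv_scaleR scaleR_sum_right)

lemma RS_add: "RS (a + b) j = RS a j + RS b j" by (simp add: RS_def SW_add)
lemma RS_scaleR: "RS (c *\<^sub>R a) j = c * RS a j" by (simp add: RS_def SW_scaleR)

lemma Bc_sym: "Bc W V = Bc V W"
  unfolding Bc_def using Re_hb_herm_swap[OF A_herm] by (simp add: mult.commute)

lemma Bc_add_right: "Bc W (a + b) = Bc W a + Bc W b"
  by (simp add: Bc_def hb_add_right RS_add sum.distrib distrib_left algebra_simps)

lemma Bc_scaleR_right: "Bc W (c *\<^sub>R a) = c * Bc W a"
  by (simp add: Bc_def hb_scaleR_right RS_scaleR sum_distrib_left algebra_simps)

lemma Bc_linear_right: "linear (Bc W)"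
  by (rule linearI) (simp_all add: Bc_add_right Bc_scaleR_right)

lemma Bc_bilinear: "bilinear Bc"
  unfolding bilinear_def
proof (intro conjI allI)
  fix W show "linear (\<lambda>V. Bc W V)" using Bc_linear_right[of W] by simp
next
  fix V show "linear (\<lambda>W. Bc W V)"
    using Bc_linear_right[of V] by (simp add: Bc_sym[of _ V])
qed

lemma Bc_pos: "W \<noteq> 0 \<Longrightarrow> Bc W W > 0"
proof -
  assume "W \<noteq> 0"
  then obtain n0 where n0: "W$n0 \<noteq> 0" by (auto simp: vec_eq_iff)
  have "0 < Re (hb (A n0) (W$n0) (W$n0))" using A_pd[OF n0] .
  also have "\<dots> \<le> (\<Sum>n\<in>UNIV. Re (hb (A n) (W$n) (W$n)))"
    by (rule member_le_sum) (auto simp: A_psd)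
  also have "\<dots> \<le> Bc W W"
  proof -
    have "0 \<le> (\<Sum>j\<in>UNIV. RS W j * RS W j)" by (intro sum_nonneg) simp
    then show ?thesis unfolding Bc_def using kk_pos by simp
  qed
  finally show ?thesis .
qed

sublocale G: gauss Bc
  by unfold_locales (auto simp: Bc_bilinear Bc_sym Bc_pos)

end


lemma sq_cnj_swap: "sq w v = cnj (sq v w)"
  by (simp add: sq_def mult.commute)

lemma sq_real_left: "Re (sq (cplx_vec x) w) = (\<Sum>i\<in>UNIV. x$i * Re (w$i))"
  by (simp add: sq_def cplx_vec_def Re_sum)

context em
begin

lemma Cyt_nth: "(Cyt *v r) $ i = \<sigma>\<^sup>2 * r$i + (1/2) * (Re_mat P *v r) $ i"
proof -
  have "Cyt = \<sigma>\<^sup>2 *\<^sub>R mat 1 + (1/2) *\<^sub>R Re_mat P"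
    by (simp add: Cyt_def Cy_def P_def Cn_def)
  then have "Cyt *v r = \<sigma>\<^sup>2 *\<^sub>R r + (1/2) *\<^sub>R (Re_mat P *v r)"
    by (simp add: matrix_vector_mult_add_rdistrib scaleR_matrix_vector_assoc[symmetric])
  then show ?thesis by simp
qed

lemma xCx_nonneg: "0 \<le> (\<Sum>i\<in>UNIV. x$i * (Re_mat P *v x)$i)"
proof -
  have "(\<Sum>i\<in>UNIV. x$i * (Re_mat P *v x)$i) = Re (sq (cplx_vec x) (P *v cplx_vec x))"
    by (simp add: sq_real_left Re_mat_mv)
  also have "\<dots> = (\<Sum>n\<in>UNIV. Re (sq (cplx_vec x) ((\<Psi> n ** Cn n ** adj (\<Psi> n)) *v cplx_vec x)))"
    by (simp add: P_def sum_mv sq_def vec_eq_iff sum_component sum_distrib_left Re_sum)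
       (rule sum.swap)
  also have "\<dots> = (\<Sum>n\<in>UNIV. Re (hb (Cn n) (adj (\<Psi> n) *v cplx_vec x) (adj (\<Psi> n) *v cplx_vec x)))"
    by (simp add: hb_sq sq_adj matrix_vector_mul_assoc[symmetric])
  also have "\<dots> \<ge> 0" by (intro sum_nonneg Cn_psd)
  finally show ?thesis .
qed

lemma Cyt_invertible: "invertible Cyt"
proof (rule invertible_if_inj, rule injI)
  fix a b assume ab: "Cyt *v a = Cyt *v b"
  define x where "x = a - b"
  have "Cyt *v x = 0" using ab by (simp add: x_def matrix_vector_mult_diff_distrib)
  then have "0 = (\<Sum>i\<in>UNIV. x$i * (Cyt *v x)$i)" by simp
  also have "\<dots> = \<sigma>\<^sup>2 * (\<Sum>i\<in>UNIV. x$i * x$i) + (1/2) * (\<Sum>i\<in>UNIV. x$i * (Re_mat P *v x)$i)"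
    by (simp add: Cyt_nth distrib_left sum.distrib sum_distrib_left mult_ac)
  finally have e: "\<sigma>\<^sup>2 * (\<Sum>i\<in>UNIV. x$i * x$i) + (1/2) * (\<Sum>i\<in>UNIV. x$i * (Re_mat P *v x)$i) = 0" by simp
  have s0: "0 \<le> (\<Sum>i\<in>UNIV. x$i * x$i)" by (intro sum_nonneg) simp
  have "\<sigma>\<^sup>2 * (\<Sum>i\<in>UNIV. x$i * x$i) = 0"
    using e xCx_nonneg[of x] mult_nonneg_nonneg[OF zero_le_power2[of \<sigma>] s0] by linarith
  then have "(\<Sum>i\<in>UNIV. x$i * x$i) = 0" using \<sigma>pos by simp
  then have "\<forall>i\<in>UNIV. x$i * x$i = 0" by (subst sum_nonneg_eq_0_iff[symmetric]) auto
  then have "x = 0" by (simp add: vec_eq_iff)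
  then show "a = b" by (simp add: x_def)
qed

lemma Cyt_Cyi: "Cyt *v (Cyi *v c) = c"
  by (simp add: Cyi_def matrix_vector_mul_assoc matrix_inv_facts[OF Cyt_invertible])

lemma RePCyi: "(Re_mat P *v (Cyi *v c)) $ j = 2 * (c$j - \<sigma>\<^sup>2 * (Cyi *v c)$j)"
  using Cyt_nth[of "Cyi *v c" j] by (simp add: Cyt_Cyi)

definition T :: "real^'n \<Rightarrow> complex^'m^'n" where
  "T r = (\<chi> n. (Cn n ** adj (\<Psi> n)) *v cplx_vec r)"

definition Sx :: "complex^'m^'n \<Rightarrow> real^'n \<Rightarrow> real" where
  "Sx x a = (\<Sum>j\<in>UNIV. a$j * RS x j)"

lemma Sx_add: "Sx x (a + b) = Sx x a + Sx x b"
  by (simp add: Sx_def distrib_right sum.distrib)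

lemma Sx_scaleR: "Sx x (c *\<^sub>R a) = c * Sx x a"
  by (simp add: Sx_def sum_distrib_left mult.assoc)

lemma Sx_diff: "Sx x (a - b) = Sx x a - Sx x b"
  by (simp add: Sx_def left_diff_distrib sum_subtractf)

lemma A_Cn_mv: "A n *v ((Cn n ** Q) *v v) = Q *v v"
  by (simp add: matrix_vector_mul_assoc matrix_mul_assoc A_Cn)

lemma hb_T: "(\<Sum>n\<in>UNIV. Re (hb (A n) (T r $ n) (x$n))) = Sx x r"
proof -
  have "Re (hb (A n) (T r $ n) (x$n)) = (\<Sum>j\<in>UNIV. r$j * Re ((\<Psi> n *v x$n)$j))" for n
  proof -
    have "Re (hb (A n) (T r $ n) (x$n)) = Re (hb (A n) (x$n) (T r $ n))"
      by (rule Re_hb_herm_swap[OF A_herm])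
    also have "\<dots> = Re (sq (x$n) (adj (\<Psi> n) *v cplx_vec r))"
      by (simp add: hb_sq T_def A_Cn_mv)
    also have "\<dots> = Re (sq (\<Psi> n *v x$n) (cplx_vec r))"
      by (simp add: sq_adj)
    also have "\<dots> = (\<Sum>j\<in>UNIV. r$j * Re ((\<Psi> n *v x$n)$j))"
      by (rule Re_sq_real)
    finally show ?thesis .
  qed
  then have "(\<Sum>n\<in>UNIV. Re (hb (A n) (T r $ n) (x$n))) = (\<Sum>n\<in>UNIV. \<Sum>j\<in>UNIV. r$j * Re ((\<Psi> n *v x$n)$j))"
    by simp
  also have "\<dots> = (\<Sum>j\<in>UNIV. \<Sum>n\<in>UNIV. r$j * Re ((\<Psi> n *v x$n)$j))" by (rule sum.swap)
  also have "\<dots> = Sx x r"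
    by (simp add: Sx_def RS_def SW_def sum_component Re_sum sum_distrib_left)
  finally show ?thesis .
qed

lemma RS_T: "RS (T r) j = (Re_mat P *v r) $ j"
proof -
  have "SW (T r) = P *v cplx_vec r"
    by (simp add: SW_def T_def P_def sum_mv matrix_vector_mul_assoc matrix_mul_assoc)
  then show ?thesis by (simp add: RS_def Re_mat_mv)
qed

lemma Bc_T: "Bc (T r) x = Sx x r + kk * Sx x (Re_mat P *v r)"
  by (simp add: Bc_def hb_T Sx_def RS_T mult.commute)

definition E :: "complex^'m^'n \<Rightarrow> complex^'m^'n" where
  "E e = (\<chi> n. Cn n *v e$n)"

definition phie :: "complex^'m^'n \<Rightarrow> complex^'m^'n \<Rightarrow> real" where
  "phie e x = Re (\<Sum>n\<in>UNIV. sq (e$n) (x$n))"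

definition ce :: "complex^'m^'n \<Rightarrow> real^'n" where
  "ce e = (\<chi> j. RS (E e) j)"

lemma hb_E: "(\<Sum>n\<in>UNIV. Re (hb (A n) (E e $ n) (x$n))) = phie e x"
proof -
  have "Re (hb (A n) (E e $ n) (x$n)) = Re (sq (e$n) (x$n))" for n
  proof -
    have "Re (hb (A n) (E e $ n) (x$n)) = Re (hb (A n) (x$n) (E e $ n))"
      by (rule Re_hb_herm_swap[OF A_herm])
    also have "\<dots> = Re (sq (x$n) (e$n))"
      using A_Cn_mv[of n "mat 1" "e$n"] by (simp add: hb_sq E_def)
    also have "\<dots> = Re (sq (e$n) (x$n))" by (subst sq_cnj_swap) simp
    finally show ?thesis .
  qed
  then show ?thesis by (simp add: phie_def Re_sum)
qed

lemma Bc_E: "Bc (E e) x = phie e x + kk * Sx x (ce e)"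
  by (simp add: Bc_def hb_E Sx_def ce_def mult.commute)

definition z :: "complex^'m^'n \<Rightarrow> complex^'m^'n" where
  "z e = E e - (1/2) *\<^sub>R T (Cyi *v ce e)"

lemma Bc_z: "Bc (z e) x = phie e x"
proof -
  define r where "r = Cyi *v ce e"
  have RP: "Re_mat P *v r = 2 *\<^sub>R (ce e - \<sigma>\<^sup>2 *\<^sub>R r)"
    by (simp add: vec_eq_iff r_def RePCyi)
  have "Bc (z e) x = Bc (E e) x - (1/2) * Bc (T r) x"
    by (simp add: z_def r_def G.B_diff_left G.B_scaleR_left)
  also have "\<dots> = phie e x + (kk - kk) * Sx x (ce e) + (kk * \<sigma>\<^sup>2 - 1/2) * Sx x r"
    by (simp add: Bc_E Bc_T RP Sx_diff Sx_scaleR algebra_simps)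
  also have "\<dots> = phie e x" by (simp add: kk_sigma)
  finally show ?thesis .
qed

definition mu :: "complex^'m^'n" where "mu = (\<chi> n. w_tilde f s \<Psi> \<sigma> thold y n)"

lemma mu_T: "mu = (1/2) *\<^sub>R T (Cyi *v y)"
  by (simp add: vec_eq_iff mu_def w_tilde_def T_def Cyi_def Cyt_def Cn_def)

lemma Bc_mu: "Bc mu x = kk * Sx x y"
proof -
  define u where "u = Cyi *v y"
  have RP: "Re_mat P *v u = 2 *\<^sub>R (y - \<sigma>\<^sup>2 *\<^sub>R u)"
    by (simp add: vec_eq_iff u_def RePCyi)
  have "Bc mu x = (1/2) * Bc (T u) x" by (simp add: mu_T u_def G.B_scaleR_left)
  also have "\<dots> = kk * Sx x y + (1/2 - kk * \<sigma>\<^sup>2) * Sx x u"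
    by (simp add: Bc_T RP Sx_diff Sx_scaleR algebra_simps)
  also have "\<dots> = kk * Sx x y" by (simp add: kk_sigma)
  finally show ?thesis .
qed

end


lemma linear_vec_nth: "linear (\<lambda>x::'a::real_vector^'b. x $ n)"
  by (rule linearI) simp_all

context em
begin

lemma lik_eq:
  "lik_density \<Psi> \<sigma> y W = (1 / sqrt (2 * pi * \<sigma>\<^sup>2)) ^ CARD('n) * exp (- (kk * (\<Sum>i\<in>UNIV. (y$i - RS W i)\<^sup>2)))"
proof -
  define c where "c = 1 / sqrt (2 * pi * \<sigma>\<^sup>2)"
  have nd: "normal_density (Re ((\<Sum>n\<in>UNIV. \<Psi> n *v (W$n)) $ i)) \<sigma> (y$i) = c * exp (- (kk * (y$i - RS W i)\<^sup>2))" for i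
    by (simp add: normal_density_def kk_def c_def RS_def SW_def)
  have "lik_density \<Psi> \<sigma> y W = (\<Prod>i\<in>UNIV. c * exp (- (kk * (y$i - RS W i)\<^sup>2)))"
    unfolding lik_density_def nd ..
  also have "\<dots> = c ^ CARD('n) * exp (- (kk * (\<Sum>i\<in>UNIV. (y$i - RS W i)\<^sup>2)))"
    by (simp add: prod.distrib exp_sum[symmetric] sum_negf sum_distrib_left)
  finally show ?thesis by (simp add: c_def)
qed

lemma prior_eq:
  "prior_density f s \<theta> W = exp (- (\<Sum>n\<in>UNIV. Re (hform (W$n) (matrix_inv (Cmat f s (\<theta>$n))))))
      / (\<Prod>n\<in>UNIV. pi ^ CARD('m) * cmod (det (Cmat f s (\<theta>$n))))"
  unfolding prior_density_def cgauss_density_def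
  by (simp add: prod_dividef exp_sum[symmetric] sum_negf)

definition K0 where
  "K0 = (1 / sqrt (2 * pi * \<sigma>\<^sup>2)) ^ CARD('n) / (\<Prod>n\<in>UNIV. pi ^ CARD('m) * cmod (det (Cn n)))"

lemma det_Cn_nz: "det (Cn n) \<noteq> 0"
  using Cn_inv invertible_det_nz by blast

lemma K0_pos: "K0 > 0"
  using \<sigma>pos det_Cn_nz by (auto simp: K0_def intro!: prod_pos divide_pos_pos)

lemma sum_sq_diff: "(\<Sum>i\<in>UNIV. (y$i - RS W i)\<^sup>2) = (\<Sum>i\<in>UNIV. (y$i)\<^sup>2) - 2 * Sx W y + (\<Sum>i\<in>UNIV. RS W i * RS W i)"
proof -
  have "(\<Sum>i\<in>UNIV. (y$i - RS W i)\<^sup>2) = (\<Sum>i\<in>UNIV. (y$i)\<^sup>2 + RS W i * RS W i - 2 * (y$i * RS W i))"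
    by (intro sum.cong refl) (simp add: power2_eq_square algebra_simps)
  also have "\<dots> = (\<Sum>i\<in>UNIV. (y$i)\<^sup>2) + (\<Sum>i\<in>UNIV. RS W i * RS W i) - 2 * (\<Sum>i\<in>UNIV. y$i * RS W i)"
    by (simp add: sum.distrib sum_subtractf sum_distrib_left)
  finally show ?thesis by (simp add: Sx_def)
qed

lemma Q_eq:
  "(\<Sum>n\<in>UNIV. Re (hb (A n) (W$n) (W$n))) + kk * (\<Sum>i\<in>UNIV. (y$i - RS W i)\<^sup>2)
     = Bc (W - mu) (W - mu) + (kk * (\<Sum>i\<in>UNIV. (y$i)\<^sup>2) - Bc mu mu)"
proof -
  have e1: "Bc W W = (\<Sum>n\<in>UNIV. Re (hb (A n) (W$n) (W$n))) + kk * (\<Sum>i\<in>UNIV. RS W i * RS W i)"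
    by (simp add: Bc_def)
  have e2: "Bc (W - mu) (W - mu) = Bc W W - 2 * (kk * Sx W y) + Bc mu mu"
    by (simp add: G.B_diff_left G.B_diff_right Bc_sym[of W mu] Bc_mu)
  show ?thesis unfolding e2 e1 sum_sq_diff by (simp add: algebra_simps)
qed

definition K1 where "K1 = K0 * exp (- (kk * (\<Sum>i\<in>UNIV. (y$i)\<^sup>2) - Bc mu mu))"

lemma K1_pos: "K1 > 0" using K0_pos by (simp add: K1_def)

lemma joint_thold: "joint_density f s \<Psi> \<sigma> thold y W = K1 * G.g (W - mu)"
proof -
  have "joint_density f s \<Psi> \<sigma> thold y W
      = K0 * exp (- ((\<Sum>n\<in>UNIV. Re (hb (A n) (W$n) (W$n))) + kk * (\<Sum>i\<in>UNIV. (y$i - RS W i)\<^sup>2)))"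
    unfolding joint_density_def lik_eq prior_eq
    by (simp add: K0_def hform_hb A_def Cn_def exp_add[symmetric] exp_diff field_simps)
  also have "\<dots> = K1 * G.g (W - mu)"
    unfolding Q_eq K1_def G.g_def by (simp add: exp_add[symmetric] exp_diff field_simps)
  finally show ?thesis .
qed

lemma int_g_shift: "(\<integral>x. G.g (x - c) \<partial>lborel) = G.Z"
  using lborel_integral_translate[of "\<lambda>x. G.g (x - c)" c] unfolding G.Z_def by simp

lemma post_eq: "post_density f s \<Psi> \<sigma> thold y W = G.g (W - mu) / G.Z"
proof -
  have jeq: "joint_density f s \<Psi> \<sigma> thold y = (\<lambda>V. K1 * G.g (V - mu))"
    by (simp add: fun_eq_iff joint_thold)
  show ?thesis
    unfolding post_density_def jeq using K1_pos by (simp add: int_g_shift)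
qed

lemma post_mean_eq: "post_mean f s \<Psi> \<sigma> thold y n = w_tilde f s \<Psi> \<sigma> thold y n"
proof -
  note [measurable] = linear_meas[OF linear_vec_nth[of n]]
  have m: "(\<lambda>W. (G.g (W - mu) / G.Z) *\<^sub>R (W$n)) \<in> borel_measurable borel"
    by measurable
  have "post_mean f s \<Psi> \<sigma> thold y n = (\<integral>W. (G.g (W - mu) / G.Z) *\<^sub>R (W$n) \<partial>lborel)"
    by (simp add: post_mean_def post_eq)
  also have "\<dots> = (\<integral>x. (G.g (mu + x - mu) / G.Z) *\<^sub>R ((mu + x)$n) \<partial>lborel)"
    by (rule lborel_integral_translate[OF m, symmetric])
  also have "\<dots> = (\<integral>x. (G.g x / G.Z) *\<^sub>R (mu$n) + (1 / G.Z) *\<^sub>R (G.g x *\<^sub>R x$n) \<partial>lborel)"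
    by (intro Bochner_Integration.integral_cong) (simp_all add: scaleR_add_right)
  also have "\<dots> = (\<integral>x. G.g x / G.Z \<partial>lborel) *\<^sub>R (mu$n) + (1 / G.Z) *\<^sub>R (\<integral>x. G.g x *\<^sub>R x$n \<partial>lborel)"
  proof -
    have i1: "integrable lborel (\<lambda>x. G.g x / G.Z)" using G.integrable_g by simp
    have i2: "integrable lborel (\<lambda>x. G.g x *\<^sub>R x$n)"
      using G.integrable_g_lin[OF linear_vec_nth, of 0 n] by simp
    have "(\<integral>x. (G.g x / G.Z) *\<^sub>R (mu$n) + (1 / G.Z) *\<^sub>R (G.g x *\<^sub>R x$n) \<partial>lborel)
        = (\<integral>x. (G.g x / G.Z) *\<^sub>R (mu$n) \<partial>lborel) + (\<integral>x. (1 / G.Z) *\<^sub>R (G.g x *\<^sub>R x$n) \<partial>lborel)"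
      by (rule Bochner_Integration.integral_add) (rule integrable_scaleR_left[OF i1], rule integrable_scaleR_right[OF i2])
    moreover have "(\<integral>x. (G.g x / G.Z) *\<^sub>R (mu$n) \<partial>lborel) = (\<integral>x. G.g x / G.Z \<partial>lborel) *\<^sub>R (mu$n)"
      using i1 by (rule integral_scaleR_left)
    ultimately show ?thesis by (simp only: integral_scaleR_right)
  qed
  also have "\<dots> = mu$n"
    using G.Z_pos G.mean_zero[OF linear_vec_nth, of n] by (simp add: G.Z_def[symmetric])
  finally show ?thesis by (simp add: mu_def)
qed

end


lemma sum_pair_if:
  fixes F :: "'a::finite \<times> 'b::finite \<Rightarrow> 'c::comm_monoid_add"
  shows "(\<Sum>q\<in>UNIV. if fst q = n then F q else 0) = (\<Sum>m\<in>UNIV. F (n, m))"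
proof -
  have "(\<Sum>q\<in>UNIV. if fst q = n then F q else 0) = (\<Sum>q\<in>UNIV \<times> UNIV. if fst q = n then F q else 0)"
    by simp
  also have "\<dots> = (\<Sum>n'\<in>UNIV. \<Sum>m\<in>UNIV. if n' = n then F (n', m) else 0)"
    unfolding sum.cartesian_product by (intro sum.cong) auto
  also have "\<dots> = (\<Sum>n'\<in>UNIV. if n' = n then (\<Sum>m\<in>UNIV. F (n', m)) else 0)"
    by (intro sum.cong refl) auto
  also have "\<dots> = (\<Sum>m\<in>UNIV. F (n, m))" by simp
  finally show ?thesis .
qed

lemma sum_if_out: "(\<Sum>i\<in>S. if P then f i else 0) = (if P then (\<Sum>i\<in>S. f i) else 0)"
  by (cases P) simp_all

context em
begin

definition eva :: "complex \<Rightarrow> 'n \<Rightarrow> 'm \<Rightarrow> complex^'m^'n" where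
  "eva \<alpha> n a = (\<chi> n' m. if n' = n \<and> m = a then \<alpha> else 0)"

lemma eva_nth: "eva \<beta> n b $ n' $ i = (if n' = n then (if i = b then \<beta> else 0) else 0)"
  by (simp add: eva_def)

lemma phie_eva: "phie (eva \<beta> n b) v = Re (cnj \<beta> * v$n$b)"
proof -
  have e0: "eva \<beta> n b $ n' = 0" if "n' \<noteq> n" for n' using that by (simp add: vec_eq_iff eva_nth)
  have "(\<Sum>n'\<in>UNIV. sq (eva \<beta> n b $ n') (v$n')) = (\<Sum>n'\<in>UNIV. if n' = n then sq (eva \<beta> n b $ n) (v$n) else 0)"
    by (intro sum.cong refl) (auto simp: e0 sq_def)
  also have "\<dots> = sq (eva \<beta> n b $ n) (v$n)" by simp
  also have "\<dots> = (\<Sum>i\<in>UNIV. if i = b then cnj \<beta> * v$n$b else 0)"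
    unfolding sq_def by (intro sum.cong refl) (simp add: eva_nth)
  also have "\<dots> = cnj \<beta> * v$n$b" by simp
  finally show ?thesis by (simp add: phie_def)
qed

lemma E_eva_nth: "E (eva \<alpha> n a) $ n' $ b = (if n' = n then \<alpha> * Cn n $ b $ a else 0)"
  by (simp add: E_def eva_def mv_nth if_distrib if_distribR mult.commute cong: if_cong)

lemma SW_E_eva: "SW (E (eva \<alpha> n a)) $ j = \<alpha> * (\<Psi> n ** Cn n) $ j $ a"
proof -
  have "SW (E (eva \<alpha> n a)) $ j = (\<Sum>n'\<in>UNIV. \<Sum>m\<in>UNIV. \<Psi> n' $ j $ m * E (eva \<alpha> n a) $ n' $ m)"
    by (simp add: SW_def sum_component mv_nth)
  also have "\<dots> = (\<Sum>m\<in>UNIV. \<Psi> n $ j $ m * (\<alpha> * Cn n $ m $ a))"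
    by (simp add: E_eva_nth if_distrib if_distribR sum_if_out cong: if_cong)
  also have "\<dots> = \<alpha> * (\<Psi> n ** Cn n) $ j $ a"
    by (simp add: mm_nth sum_distrib_left mult_ac)
  finally show ?thesis .
qed

lemma T_nth: "T r $ n $ b = (\<Sum>j\<in>UNIV. (Cn n ** adj (\<Psi> n)) $ b $ j * of_real (r$j))"
  by (simp add: T_def mv_nth cplx_vec_def)

lemma ce_eva: "ce (eva \<alpha> n a) = (\<chi> k. Re (\<alpha> * (\<Psi> n ** Cn n) $ k $ a))"
  by (simp add: ce_def RS_def SW_E_eva vec_eq_iff)

lemma z_eva: "z (eva \<alpha> n a) $ n $ b = \<alpha> * Cn n $ b $ a
   - (1/2) *\<^sub>R (\<Sum>j\<in>UNIV. (Cn n ** adj (\<Psi> n)) $ b $ j * of_real ((Cyi *v (\<chi> k. Re (\<alpha> * (\<Psi> n ** Cn n) $ k $ a))) $ j))"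
  by (simp add: z_def E_eva_nth T_nth ce_eva)

definition Gm where "Gm = Gamma f s \<Psi> \<sigma> thold"

lemma Gamma_entry: "Gm $ (n, b) $ (n, a) = Cn n $ b $ a
  - (1/4) *\<^sub>R (\<Sum>j\<in>UNIV. (Cn n ** adj (\<Psi> n)) $ b $ j * (\<Sum>k\<in>UNIV. of_real (Cyi $ j $ k) * (\<Psi> n ** Cn n) $ k $ a))"
proof -
  define G0 where "G0 = Gamma0 f s thold"
  define D where "D = Dmat \<Psi>"
  have G0n: "G0 $ p $ q = (if fst p = fst q then Cn (fst p) $ snd p $ snd q else 0)" for p q
    by (simp add: G0_def Gamma0_def Cn_def)
  have L: "(G0 ** adj D) $ (n, b) $ j = (Cn n ** adj (\<Psi> n)) $ b $ j" for j
  proof -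
    have "(G0 ** adj D) $ (n, b) $ j = (\<Sum>q\<in>UNIV. if fst q = n then Cn n $ b $ snd q * cnj (\<Psi> n $ j $ snd q) else 0)"
      by (simp add: mm_nth G0n D_def Dmat_def if_distrib if_distribR eq_commute cong: if_cong)
    also have "\<dots> = (Cn n ** adj (\<Psi> n)) $ b $ j"
      by (subst sum_pair_if) (simp add: mm_nth)
    finally show ?thesis .
  qed
  have R: "(D ** G0) $ k $ (n, a) = (\<Psi> n ** Cn n) $ k $ a" for k
  proof -
    have "(D ** G0) $ k $ (n, a) = (\<Sum>q\<in>UNIV. if fst q = n then \<Psi> n $ k $ snd q * Cn n $ snd q $ a else 0)"
      by (simp add: mm_nth G0n D_def Dmat_def if_distrib if_distribR cong: if_cong)
    also have "\<dots> = (\<Psi> n ** Cn n) $ k $ a"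
      by (subst sum_pair_if) (simp add: mm_nth)
    finally show ?thesis .
  qed
  have "G0 ** adj D ** cplx_mat Cyi ** D ** G0 = (G0 ** adj D) ** (cplx_mat Cyi ** (D ** G0))"
    by (simp add: matrix_mul_assoc)
  have inner: "(cplx_mat Cyi ** (D ** G0)) $ j $ (n, a) = (\<Sum>k\<in>UNIV. of_real (Cyi $ j $ k) * (\<Psi> n ** Cn n) $ k $ a)" for j
  proof -
    have "(cplx_mat Cyi ** (D ** G0)) $ j $ (n, a) = (\<Sum>k\<in>UNIV. cplx_mat Cyi $ j $ k * (D ** G0) $ k $ (n, a))"
      by (rule mm_nth)
    then show ?thesis by (simp add: R cplx_mat_def)
  qed
  have "(G0 ** adj D ** cplx_mat Cyi ** D ** G0) $ (n, b) $ (n, a)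
      = ((G0 ** adj D) ** (cplx_mat Cyi ** (D ** G0))) $ (n, b) $ (n, a)"
    using \<open>G0 ** adj D ** cplx_mat Cyi ** D ** G0 = _\<close> by simp
  also have "\<dots> = (\<Sum>j\<in>UNIV. (G0 ** adj D) $ (n, b) $ j * (cplx_mat Cyi ** (D ** G0)) $ j $ (n, a))"
    by (rule mm_nth)
  also have "\<dots> = (\<Sum>j\<in>UNIV. (Cn n ** adj (\<Psi> n)) $ b $ j * (\<Sum>k\<in>UNIV. of_real (Cyi $ j $ k) * (\<Psi> n ** Cn n) $ k $ a))"
    by (simp only: L inner)
  finally have "(G0 ** adj D ** cplx_mat Cyi ** D ** G0) $ (n, b) $ (n, a)
      = (\<Sum>j\<in>UNIV. (Cn n ** adj (\<Psi> n)) $ b $ j * (\<Sum>k\<in>UNIV. of_real (Cyi $ j $ k) * (\<Psi> n ** Cn n) $ k $ a))" .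
  moreover have "Gm = G0 - (1/4) *\<^sub>R (G0 ** adj D ** cplx_mat Cyi ** D ** G0)"
    by (simp add: Gm_def Gamma_def G0_def D_def Cyi_def Cyt_def)
  ultimately show ?thesis
    by (simp add: G0n)
qed

lemma cov_both:
  "(1/2) * (phie (eva 1 n b) (z (eva 1 n a)) + phie (eva \<i> n b) (z (eva \<i> n a))) = Re (Gm $ (n, b) $ (n, a))
   \<and> (1/2) * (phie (eva \<i> n b) (z (eva 1 n a)) - phie (eva 1 n b) (z (eva \<i> n a))) = Im (Gm $ (n, b) $ (n, a))"
proof -
  define h where "h j = (Cn n ** adj (\<Psi> n)) $ b $ j" for j
  define p where "p k = (\<Psi> n ** Cn n) $ k $ a" for k
  define G where "G = Cn n $ b $ a"
  define \<rho> where "\<rho> j = (\<Sum>k\<in>UNIV. Cyi $ j $ k * Re (p k))" for j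
  define \<eta> where "\<eta> j = (\<Sum>k\<in>UNIV. Cyi $ j $ k * Im (p k))" for j
  define X where "X = (\<Sum>j\<in>UNIV. h j * of_real (\<rho> j))"
  define Y where "Y = (\<Sum>j\<in>UNIV. h j * of_real (\<eta> j))"
  have r1: "(Cyi *v (\<chi> k. Re (1 * (\<Psi> n ** Cn n) $ k $ a))) $ j = \<rho> j" for j
    by (simp add: mv_nth \<rho>_def p_def)
  have ri: "(Cyi *v (\<chi> k. Re (\<i> * (\<Psi> n ** Cn n) $ k $ a))) $ j = - \<eta> j" for j
    by (simp add: mv_nth \<eta>_def p_def sum_negf)
  have z1: "z (eva 1 n a) $ n $ b = G - (1/2) *\<^sub>R X"
    unfolding z_eva r1 by (simp add: G_def X_def h_def)
  have zi: "z (eva \<i> n a) $ n $ b = \<i> * G + (1/2) *\<^sub>R Y"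
    unfolding z_eva ri by (simp add: G_def Y_def h_def sum_negf)
  have inner: "(\<Sum>k\<in>UNIV. of_real (Cyi $ j $ k) * p k) = of_real (\<rho> j) + \<i> * of_real (\<eta> j)" for j
    by (rule complex_eqI) (simp_all add: Re_sum Im_sum \<rho>_def \<eta>_def)
  have Ge: "Gm $ (n, b) $ (n, a) = G - (1/4) *\<^sub>R (X + \<i> * Y)"
  proof -
    have "Gm $ (n, b) $ (n, a) = G - (1/4) *\<^sub>R (\<Sum>j\<in>UNIV. h j * (\<Sum>k\<in>UNIV. of_real (Cyi $ j $ k) * p k))"
      unfolding Gamma_entry by (simp add: G_def h_def p_def)
    also have "(\<Sum>j\<in>UNIV. h j * (\<Sum>k\<in>UNIV. of_real (Cyi $ j $ k) * p k)) = X + \<i> * Y"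
      unfolding inner by (simp add: X_def Y_def distrib_left sum.distrib sum_distrib_left mult_ac)
    finally show ?thesis .
  qed
  show ?thesis
    by (simp add: phie_eva z1 zi Ge algebra_simps)
qed

lemma cov_re: "(1/2) * (phie (eva 1 n b) (z (eva 1 n a)) + phie (eva \<i> n b) (z (eva \<i> n a))) = Re (Gm $ (n, b) $ (n, a))"
  using cov_both by blast

lemma cov_im: "(1/2) * (phie (eva \<i> n b) (z (eva 1 n a)) - phie (eva 1 n b) (z (eva \<i> n a))) = Im (Gm $ (n, b) $ (n, a))"
  using cov_both by blast

end


context gauss
begin

lemma integrable_g_lin2:
  assumes L1: "linear (\<phi> :: 'v \<Rightarrow> real)" and L2: "linear (\<psi> :: 'v \<Rightarrow> real)"
  shows "integrable lborel (\<lambda>x. g (x - u) * (\<phi> x * \<psi> x))"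
proof -
  note [measurable] = linear_meas[OF L1] linear_meas[OF L2]
  obtain K1 where K1: "K1 > 0" "\<And>x. norm (\<phi> x) \<le> norm x * K1" using linear_bound_lin[OF L1] by blast
  obtain K2 where K2: "K2 > 0" "\<And>x. norm (\<psi> x) \<le> norm x * K2" using linear_bound_lin[OF L2] by blast
  have "\<bar>\<phi> x * \<psi> x\<bar> \<le> (K1 * K2) * (1 + norm x)\<^sup>2" for x
  proof -
    have "\<bar>\<phi> x * \<psi> x\<bar> \<le> (norm x * K1) * (norm x * K2)"
      unfolding abs_mult using K1 K2 by (intro mult_mono) auto
    also have "\<dots> = (K1 * K2) * (norm x * norm x)" by (simp add: mult_ac)
    also have "\<dots> \<le> (K1 * K2) * (1 + norm x)\<^sup>2"
    proof (intro mult_left_mono)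
      have "0 \<le> norm x" by simp
      then show "norm x * norm x \<le> (1 + norm x)\<^sup>2" by (simp add: power2_eq_square algebra_simps)
    qed (use K1 K2 in simp)
    finally show ?thesis .
  qed
  then show ?thesis by (intro integrable_g_shift_bound_real) auto
qed

lemma integrable_g_const: "integrable lborel (\<lambda>x. g (x - u) * c)"
  using integrable_g_shift[of u] by simp

end

lemma linear_Re_sum_sq:
  "linear (\<lambda>x::complex^'m^'n. Re (\<Sum>n\<in>UNIV. sq (e$n) (x$n)))"
  by (rule linearI) (simp_all add: sq_def sum.distrib distrib_left sum_distrib_left mult_ac)

context em
begin

lemma linear_phie: "linear (phie e)"
  unfolding phie_def[abs_def] by (rule linear_Re_sum_sq)

lemma E_prod: "(\<integral>x. G.g x * (phie e x * phie e' x) \<partial>lborel) = phie e' (z e) * G.Z / 2"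
proof -
  have "(\<integral>x. G.g x * (phie e x * phie e' x) \<partial>lborel) = (\<integral>x. G.g x * Bc x (z e) * phie e' x \<partial>lborel)"
    by (intro Bochner_Integration.integral_cong) (simp_all add: Bc_sym[of _ "z e"] Bc_z mult_ac)
  also have "\<dots> = phie e' (z e) * G.Z / 2" by (rule G.stein[OF linear_phie])
  finally show ?thesis .
qed

lemma Rx: "phie (eva 1 n a) x = Re (x$n$a)" by (simp add: phie_eva)
lemma Ix: "phie (eva \<i> n a) x = Im (x$n$a)" by (simp add: phie_eva)

lemma Re_hb_expand:
  "Re (hb M w w) = (\<Sum>a\<in>UNIV. \<Sum>b\<in>UNIV. Re (M$a$b) * (Re (w$a) * Re (w$b) + Im (w$a) * Im (w$b))
        - Im (M$a$b) * (Re (w$a) * Im (w$b) - Im (w$a) * Re (w$b)))"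
  by (simp add: hb_expand Re_sum algebra_simps)

end


context em
begin

abbreviation "R1 n a \<equiv> phie (eva 1 n a)"
abbreviation "Ii n a \<equiv> phie (eva \<i> n a)"

lemma IG: "integrable lborel (\<lambda>x. G.g x * (phie e x * phie e' x))"
  using G.integrable_g_lin2[OF linear_phie[of e] linear_phie[of e'], where u=0] by simp

lemma IG1: "integrable lborel (\<lambda>x. G.g x * c)"
  using G.integrable_g_const[of 0 c] by simp

lemma E_quad_term:
  "(\<integral>x. G.g x * (\<alpha> * (R1 n a x * R1 n b x + Ii n a x * Ii n b x) - \<beta> * (R1 n a x * Ii n b x - Ii n a x * R1 n b x)) \<partial>lborel)
   = G.Z * (\<alpha> * Re (Gm $ (n, b) $ (n, a)) - \<beta> * Im (Gm $ (n, b) $ (n, a)))"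
proof -
  let ?I = "\<lambda>e e'. (\<integral>x. G.g x * (phie e x * phie e' x) \<partial>lborel)"
  have "(\<integral>x. G.g x * (\<alpha> * (R1 n a x * R1 n b x + Ii n a x * Ii n b x) - \<beta> * (R1 n a x * Ii n b x - Ii n a x * R1 n b x)) \<partial>lborel)
      = (\<integral>x. \<alpha> * (G.g x * (R1 n a x * R1 n b x)) + \<alpha> * (G.g x * (Ii n a x * Ii n b x))
            - \<beta> * (G.g x * (R1 n a x * Ii n b x)) + \<beta> * (G.g x * (Ii n a x * R1 n b x)) \<partial>lborel)"
    by (intro Bochner_Integration.integral_cong) (simp_all add: algebra_simps)
  also have "\<dots> = \<alpha> * ?I (eva 1 n a) (eva 1 n b) + \<alpha> * ?I (eva \<i> n a) (eva \<i> n b)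
            - \<beta> * ?I (eva 1 n a) (eva \<i> n b) + \<beta> * ?I (eva \<i> n a) (eva 1 n b)"
    by (simp add: IG)
  also have "\<dots> = G.Z * (\<alpha> * ((1/2) * (phie (eva 1 n b) (z (eva 1 n a)) + phie (eva \<i> n b) (z (eva \<i> n a))))
            - \<beta> * ((1/2) * (phie (eva \<i> n b) (z (eva 1 n a)) - phie (eva 1 n b) (z (eva \<i> n a)))))"
    by (simp only: E_prod) (simp add: algebra_simps)
  also have "\<dots> = G.Z * (\<alpha> * Re (Gm $ (n, b) $ (n, a)) - \<beta> * Im (Gm $ (n, b) $ (n, a)))"
    by (simp only: cov_re cov_im)
  finally show ?thesis .
qed

end


lemma ring_id4: "(g::real) * (\<alpha> * (p + q) - \<beta> * (r - t)) = \<alpha> * (g * p) + \<alpha> * (g * q) - \<beta> * (g * r) + \<beta> * (g * t)"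
  by (simp add: algebra_simps)

context em
begin

definition QT where
  "QT M n a b x = Re (M$a$b) * (R1 n a x * R1 n b x + Ii n a x * Ii n b x) - Im (M$a$b) * (R1 n a x * Ii n b x - Ii n a x * R1 n b x)"

lemma Re_hb_QT: "Re (hb M (x$n) (x$n)) = (\<Sum>a\<in>UNIV. \<Sum>b\<in>UNIV. QT M n a b x)"
  by (simp add: Re_hb_expand QT_def Rx Ix)

lemma IQT: "integrable lborel (\<lambda>x. G.g x * QT M n a b x)"
proof -
  have "(\<lambda>x. G.g x * QT M n a b x) = (\<lambda>x. Re (M$a$b) * (G.g x * (R1 n a x * R1 n b x)) + Re (M$a$b) * (G.g x * (Ii n a x * Ii n b x))
      - Im (M$a$b) * (G.g x * (R1 n a x * Ii n b x)) + Im (M$a$b) * (G.g x * (Ii n a x * R1 n b x)))"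
    by (rule ext) (simp only: QT_def ring_id4)
  moreover have "integrable lborel (\<lambda>x. Re (M$a$b) * (G.g x * (R1 n a x * R1 n b x)) + Re (M$a$b) * (G.g x * (Ii n a x * Ii n b x))
      - Im (M$a$b) * (G.g x * (R1 n a x * Ii n b x)) + Im (M$a$b) * (G.g x * (Ii n a x * R1 n b x)))"
  proof -
    have i1: "integrable lborel (\<lambda>x. Re (M$a$b) * (G.g x * (R1 n a x * R1 n b x)))"
      by (rule integrable_mult_right) (rule IG)
    have i2: "integrable lborel (\<lambda>x. Re (M$a$b) * (G.g x * (Ii n a x * Ii n b x)))"
      by (rule integrable_mult_right) (rule IG)
    have i3: "integrable lborel (\<lambda>x. Im (M$a$b) * (G.g x * (R1 n a x * Ii n b x)))"
      by (rule integrable_mult_right) (rule IG)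
    have i4: "integrable lborel (\<lambda>x. Im (M$a$b) * (G.g x * (Ii n a x * R1 n b x)))"
      by (rule integrable_mult_right) (rule IG)
    show ?thesis
      by (rule Bochner_Integration.integrable_add[OF Bochner_Integration.integrable_diff[OF Bochner_Integration.integrable_add[OF i1 i2] i3] i4])
  qed
  ultimately show ?thesis by simp
qed

lemma IQQ: "integrable lborel (\<lambda>x. G.g x * Re (hb M (x$n) (x$n)))"
proof -
  have "(\<lambda>x. G.g x * Re (hb M (x$n) (x$n))) = (\<lambda>x. \<Sum>a\<in>UNIV. \<Sum>b\<in>UNIV. G.g x * QT M n a b x)"
    by (simp add: fun_eq_iff Re_hb_QT sum_distrib_left)
  moreover have "integrable lborel (\<lambda>x. \<Sum>a\<in>UNIV. \<Sum>b\<in>UNIV. G.g x * QT M n a b x)"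
    by (intro Bochner_Integration.integrable_sum IQT)
  ultimately show ?thesis by simp
qed

lemma E_QQ: "(\<integral>x. G.g x * Re (hb M (x$n) (x$n)) \<partial>lborel) = G.Z * Re (mtrace (M ** Gamma_blk f s \<Psi> \<sigma> thold n))"
proof -
  have "(\<integral>x. G.g x * Re (hb M (x$n) (x$n)) \<partial>lborel) = (\<integral>x. (\<Sum>a\<in>UNIV. \<Sum>b\<in>UNIV. G.g x * QT M n a b x) \<partial>lborel)"
    by (simp add: Re_hb_QT sum_distrib_left)
  also have "\<dots> = (\<Sum>a\<in>UNIV. \<Sum>b\<in>UNIV. (\<integral>x. G.g x * QT M n a b x \<partial>lborel))"
    by (simp add: Bochner_Integration.integral_sum Bochner_Integration.integrable_sum IQT)
  also have "\<dots> = (\<Sum>a\<in>UNIV. \<Sum>b\<in>UNIV. G.Z * (Re (M$a$b) * Re (Gm $ (n, b) $ (n, a)) - Im (M$a$b) * Im (Gm $ (n, b) $ (n, a))))"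
    unfolding QT_def by (simp only: E_quad_term)
  also have "\<dots> = G.Z * Re (\<Sum>a\<in>UNIV. \<Sum>b\<in>UNIV. M$a$b * Gm $ (n, b) $ (n, a))"
    by (simp add: Re_sum sum_distrib_left)
  also have "\<dots> = G.Z * Re (mtrace (M ** Gamma_blk f s \<Psi> \<sigma> thold n))"
    by (simp add: mtrace_def mm_nth Gamma_blk_def Gm_def)
  finally show ?thesis .
qed

definition Lf where "Lf M n c x = Re (hb M c (x$n)) + Re (hb M (x$n) c)"

lemma linear_Lf: "linear (Lf M n c)"
  by (rule linearI) (simp_all add: Lf_def hb_add_left hb_add_right hb_scaleR_left hb_scaleR_right distrib_left)

lemma hb_shift: "Re (hb M (c + x$n) (c + x$n)) = Re (hb M c c) + Lf M n c x + Re (hb M (x$n) (x$n))"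
  by (simp add: Lf_def hb_add_left hb_add_right)

lemma I_hform_shift: "integrable lborel (\<lambda>x. G.g x * Re (hb M (c + x$n) (c + x$n)))"
proof -
  have "(\<lambda>x. G.g x * Re (hb M (c + x$n) (c + x$n))) = (\<lambda>x. G.g x * Re (hb M c c) + G.g x * Lf M n c x + G.g x * Re (hb M (x$n) (x$n)))"
    by (simp add: fun_eq_iff hb_shift algebra_simps)
  moreover have "integrable lborel (\<lambda>x. G.g x * Re (hb M c c) + G.g x * Lf M n c x + G.g x * Re (hb M (x$n) (x$n)))"
    using G.integrable_g_lin_real[OF linear_Lf, of 0 M n c]
    by (intro Bochner_Integration.integrable_add IG1 IQQ) simp_all
  ultimately show ?thesis by simp
qed

lemma E_hform_shift:
  "(\<integral>x. G.g x * Re (hb M (c + x$n) (c + x$n)) \<partial>lborel) = G.Z * (Re (hb M c c) + Re (mtrace (M ** Gamma_blk f s \<Psi> \<sigma> thold n)))"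
proof -
  have i2: "integrable lborel (\<lambda>x. G.g x * Lf M n c x)"
    using G.integrable_g_lin_real[OF linear_Lf, of 0 M n c] by simp
  have "(\<integral>x. G.g x * Re (hb M (c + x$n) (c + x$n)) \<partial>lborel)
      = (\<integral>x. G.g x * Re (hb M c c) + G.g x * Lf M n c x + G.g x * Re (hb M (x$n) (x$n)) \<partial>lborel)"
    by (intro Bochner_Integration.integral_cong) (simp_all add: hb_shift algebra_simps)
  also have "\<dots> = (\<integral>x. G.g x * Re (hb M c c) \<partial>lborel) + (\<integral>x. G.g x * Lf M n c x \<partial>lborel) + (\<integral>x. G.g x * Re (hb M (x$n) (x$n)) \<partial>lborel)"
    using IG1 i2 IQQ by simp
  also have "\<dots> = G.Z * Re (hb M c c) + 0 + G.Z * Re (mtrace (M ** Gamma_blk f s \<Psi> \<sigma> thold n))"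
    by (simp add: E_QQ G.mean_zero_real[OF linear_Lf] G.Z_def)
  finally show ?thesis by (simp add: algebra_simps)
qed

end


context em
begin

definition NS where "NS W = (\<Sum>i\<in>UNIV. (y$i - RS W i)\<^sup>2)"
definition HF where "HF \<theta> W = (\<Sum>n\<in>UNIV. Re (hb (matrix_inv (Cmat f s (\<theta>$n))) (W$n) (W$n)))"
definition DD where "DD \<theta> = (\<Prod>n\<in>UNIV. pi ^ CARD('m) * cmod (det (Cmat f s (\<theta>$n))))"
definition cc where "cc = 1 / sqrt (2 * pi * \<sigma>\<^sup>2)"

lemma cc_pos: "cc > 0" using \<sigma>pos by (simp add: cc_def)

lemma DD_pos:
  fixes \<theta> :: "real^'n"
  assumes "\<forall>n. invertible (Cmat f s (\<theta>$n))"
  shows "DD \<theta> > 0"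
proof -
  have "det (Cmat f s (\<theta>$n)) \<noteq> 0" for n using assms invertible_det_nz by blast
  then show ?thesis unfolding DD_def by (intro prod_pos) simp
qed

lemma ln_DD:
  fixes \<theta> :: "real^'n"
  assumes "\<forall>n. invertible (Cmat f s (\<theta>$n))"
  shows "ln (DD \<theta>) = real CARD('n) * ln (pi ^ CARD('m)) + (\<Sum>n\<in>UNIV. ln (cmod (det (Cmat f s (\<theta>$n)))))"
proof -
  have d: "det (Cmat f s (\<theta>$n)) \<noteq> 0" for n using assms invertible_det_nz by blast
  have "ln (DD \<theta>) = (\<Sum>n\<in>UNIV. ln (pi ^ CARD('m) * cmod (det (Cmat f s (\<theta>$n)))))"
    unfolding DD_def by (rule ln_prod) (simp_all add: d)
  also have "\<dots> = (\<Sum>n\<in>UNIV. ln (pi ^ CARD('m)) + ln (cmod (det (Cmat f s (\<theta>$n)))))"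
    by (intro sum.cong refl) (simp add: ln_mult d)
  also have "\<dots> = real CARD('n) * ln (pi ^ CARD('m)) + (\<Sum>n\<in>UNIV. ln (cmod (det (Cmat f s (\<theta>$n)))))"
    by (simp add: sum.distrib)
  finally show ?thesis .
qed

lemma joint_theta:
  fixes \<theta> :: "real^'n"
  shows "joint_density f s \<Psi> \<sigma> \<theta> y W = cc ^ CARD('n) * exp (- (kk * NS W)) * exp (- HF \<theta> W) / DD \<theta>"
  unfolding joint_density_def lik_eq prior_eq
  by (simp add: cc_def NS_def HF_def DD_def hform_hb)

lemma ln_joint:
  fixes \<theta> :: "real^'n"
  shows "(\<forall>n. invertible (Cmat f s (\<theta>$n))) \<Longrightarrow>
  ln (joint_density f s \<Psi> \<sigma> \<theta> y W) = real CARD('n) * ln cc - kk * NS W - HF \<theta> W - ln (DD \<theta>)"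
  unfolding joint_theta using cc_pos DD_pos[of \<theta>]
  by (simp add: ln_div ln_mult ln_realpow)

lemma cont_RS: "continuous_on UNIV (\<lambda>W. RS W i)"
  unfolding RS_def SW_def sum_component mv_nth by (intro continuous_intros)

lemma cont_hb: "continuous_on UNIV (\<lambda>W::complex^'m^'n. Re (hb M (W$n) (W$n)))"
  unfolding hb_expand by (intro continuous_intros)

lemma cont_NS: "continuous_on UNIV NS"
  unfolding NS_def by (intro continuous_intros cont_RS)

lemma cont_HF: "continuous_on UNIV (HF (\<theta>::real^'n) :: complex^'m^'n \<Rightarrow> real)"
  unfolding HF_def by (intro continuous_on_sum cont_hb)

lemma linear_RS: "linear (\<lambda>x. RS x i)"
  by (rule linearI) (simp_all add: RS_add RS_scaleR)

lemma NS_shift: "NS (mu + x) = (\<Sum>i\<in>UNIV. (y$i - RS mu i)\<^sup>2 - 2 * (y$i - RS mu i) * RS x i + RS x i * RS x i)"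
  unfolding NS_def by (intro sum.cong refl) (simp add: RS_add power2_eq_square algebra_simps)

lemma I_NS: "integrable lborel (\<lambda>x. G.g x * NS (mu + x))"
proof -
  have "(\<lambda>x. G.g x * NS (mu + x)) = (\<lambda>x. \<Sum>i\<in>UNIV. G.g x * (y$i - RS mu i)\<^sup>2 - 2 * (y$i - RS mu i) * (G.g x * RS x i) + G.g x * (RS x i * RS x i))"
    by (rule ext, unfold NS_shift sum_distrib_left, intro sum.cong refl, simp add: algebra_simps)
  moreover have "integrable lborel (\<lambda>x. \<Sum>i\<in>UNIV. G.g x * (y$i - RS mu i)\<^sup>2 - 2 * (y$i - RS mu i) * (G.g x * RS x i) + G.g x * (RS x i * RS x i))"
  proof (intro Bochner_Integration.integrable_sum)
    fix i
    have i1: "integrable lborel (\<lambda>x. G.g x * (y$i - RS mu i)\<^sup>2)" by (rule IG1)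
    have i2: "integrable lborel (\<lambda>x. 2 * (y$i - RS mu i) * (G.g x * RS x i))"
      using G.integrable_g_lin_real[OF linear_RS, of 0 i] by (intro integrable_mult_right) simp
    have i3: "integrable lborel (\<lambda>x. G.g x * (RS x i * RS x i))"
      using G.integrable_g_lin2[OF linear_RS[of i] linear_RS[of i], where u=0] by simp
    show "integrable lborel (\<lambda>x. G.g x * (y$i - RS mu i)\<^sup>2 - 2 * (y$i - RS mu i) * (G.g x * RS x i) + G.g x * (RS x i * RS x i))"
      by (rule Bochner_Integration.integrable_add[OF Bochner_Integration.integrable_diff[OF i1 i2] i3])
  qed
  ultimately show ?thesis by simp
qed

definition N0 where "N0 = (\<integral>x. G.g x * NS (mu + x) \<partial>lborel)"

lemma I_HF:
  fixes \<theta> :: "real^'n"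
  shows "integrable lborel (\<lambda>x. G.g x * HF \<theta> (mu + x))"
proof -
  have "(\<lambda>x. G.g x * HF \<theta> (mu + x)) = (\<lambda>x. \<Sum>n\<in>UNIV. G.g x * Re (hb (matrix_inv (Cmat f s (\<theta>$n))) (mu$n + x$n) (mu$n + x$n)))"
    by (simp add: fun_eq_iff HF_def sum_distrib_left)
  moreover have "integrable lborel (\<lambda>x. \<Sum>n\<in>UNIV. G.g x * Re (hb (matrix_inv (Cmat f s (\<theta>$n))) (mu$n + x$n) (mu$n + x$n)))"
    by (intro Bochner_Integration.integrable_sum I_hform_shift)
  ultimately show ?thesis by simp
qed

lemma E_HF:
  fixes \<theta> :: "real^'n"
  shows "(\<integral>x. G.g x * HF \<theta> (mu + x) \<partial>lborel)
   = G.Z * (\<Sum>n\<in>UNIV. Re (hb (matrix_inv (Cmat f s (\<theta>$n))) (mu$n) (mu$n)) + Re (mtrace (matrix_inv (Cmat f s (\<theta>$n)) ** Gamma_blk f s \<Psi> \<sigma> thold n)))"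
proof -
  have "(\<integral>x. G.g x * HF \<theta> (mu + x) \<partial>lborel) = (\<integral>x. (\<Sum>n\<in>UNIV. G.g x * Re (hb (matrix_inv (Cmat f s (\<theta>$n))) (mu$n + x$n) (mu$n + x$n))) \<partial>lborel)"
    by (simp add: HF_def sum_distrib_left)
  also have "\<dots> = (\<Sum>n\<in>UNIV. (\<integral>x. G.g x * Re (hb (matrix_inv (Cmat f s (\<theta>$n))) (mu$n + x$n) (mu$n + x$n)) \<partial>lborel))"
    by (rule Bochner_Integration.integral_sum) (rule I_hform_shift)
  also have "\<dots> = G.Z * (\<Sum>n\<in>UNIV. Re (hb (matrix_inv (Cmat f s (\<theta>$n))) (mu$n) (mu$n)) + Re (mtrace (matrix_inv (Cmat f s (\<theta>$n)) ** Gamma_blk f s \<Psi> \<sigma> thold n)))"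
    by (simp add: E_hform_shift sum_distrib_left)
  finally show ?thesis .
qed

end


context em
begin

definition KQ where "KQ = real CARD('n) * ln cc - kk * N0 / G.Z - real CARD('n) * ln (pi ^ CARD('m))"

lemma EMQ_eq:
  fixes \<theta> :: "real^'n"
  assumes inv: "\<forall>n. invertible (Cmat f s (\<theta>$n))"
  shows "EM_Q f s \<Psi> \<sigma> y thold \<theta> = KQ - (\<Sum>n\<in>UNIV. Qkn f s \<Psi> \<sigma> thold y n (\<theta>$n))"
proof -
  define LC where "LC = real CARD('n) * ln cc - ln (DD \<theta>)"
  note [measurable] = borel_measurable_continuous_onI[OF cont_NS] borel_measurable_continuous_onI[OF cont_HF[of \<theta>]]
  have m: "(\<lambda>W. (G.g (W - mu) / G.Z) * (LC - kk * NS W - HF \<theta> W)) \<in> borel_measurable borel"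
    by measurable
  have "EM_Q f s \<Psi> \<sigma> y thold \<theta> = (\<integral>W. (G.g (W - mu) / G.Z) * (LC - kk * NS W - HF \<theta> W) \<partial>lborel)"
    unfolding EM_Q_def
    by (intro Bochner_Integration.integral_cong) (simp_all add: post_eq ln_joint[OF inv] LC_def)
  also have "\<dots> = (\<integral>x. (G.g (mu + x - mu) / G.Z) * (LC - kk * NS (mu + x) - HF \<theta> (mu + x)) \<partial>lborel)"
    by (rule lborel_integral_translate[OF m, symmetric])
  also have "\<dots> = (\<integral>x. (1 / G.Z) * (LC * G.g x) - (kk / G.Z) * (G.g x * NS (mu + x)) - (1 / G.Z) * (G.g x * HF \<theta> (mu + x)) \<partial>lborel)"
    using G.Z_pos by (intro Bochner_Integration.integral_cong) (simp_all add: field_simps)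
  also have "\<dots> = (1 / G.Z) * (LC * G.Z) - (kk / G.Z) * N0 - (1 / G.Z) * (\<integral>x. G.g x * HF \<theta> (mu + x) \<partial>lborel)"
  proof -
    have i1: "integrable lborel (\<lambda>x. (1 / G.Z) * (LC * G.g x))" using G.integrable_g by simp
    have i2: "integrable lborel (\<lambda>x. (kk / G.Z) * (G.g x * NS (mu + x)))" using I_NS by simp
    have i3: "integrable lborel (\<lambda>x. (1 / G.Z) * (G.g x * HF \<theta> (mu + x)))" using I_HF[of \<theta>] by simp
    show ?thesis
      using i1 i2 i3 by (simp add: N0_def G.Z_def)
  qed
  also have "\<dots> = LC - kk * N0 / G.Z - (\<Sum>n\<in>UNIV. Re (hb (matrix_inv (Cmat f s (\<theta>$n))) (mu$n) (mu$n)) + Re (mtrace (matrix_inv (Cmat f s (\<theta>$n)) ** Gamma_blk f s \<Psi> \<sigma> thold n)))"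
    using G.Z_pos by (simp add: E_HF)
  also have "\<dots> = KQ - (\<Sum>n\<in>UNIV. Qkn f s \<Psi> \<sigma> thold y n (\<theta>$n))"
    unfolding LC_def ln_DD[OF inv] KQ_def Qkn_def
    by (simp add: hform_hb mu_def sum.distrib algebra_simps)
  finally show ?thesis .
qed

lemma EM_equiv:
  fixes \<theta> :: "real^'n"
  assumes inv: "\<forall>n. invertible (Cmat f s (\<theta>$n))"
  shows "(\<forall>\<theta>'::real^'n. (\<forall>n. invertible (Cmat f s (\<theta>'$n))) \<longrightarrow>
                 EM_Q f s \<Psi> \<sigma> y thold \<theta>' \<le> EM_Q f s \<Psi> \<sigma> y thold \<theta>)
             \<longleftrightarrow>
             (\<forall>n. \<forall>t. invertible (Cmat f s t) \<longrightarrow>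
                 Qkn f s \<Psi> \<sigma> thold y n (\<theta>$n) \<le> Qkn f s \<Psi> \<sigma> thold y n t)"
proof
  assume H: "\<forall>\<theta>'::real^'n. (\<forall>n. invertible (Cmat f s (\<theta>'$n))) \<longrightarrow>
                 EM_Q f s \<Psi> \<sigma> y thold \<theta>' \<le> EM_Q f s \<Psi> \<sigma> y thold \<theta>"
  show "\<forall>n. \<forall>t. invertible (Cmat f s t) \<longrightarrow> Qkn f s \<Psi> \<sigma> thold y n (\<theta>$n) \<le> Qkn f s \<Psi> \<sigma> thold y n t"
  proof (intro allI impI)
    fix n t assume it: "invertible (Cmat f s t)"
    define \<theta>' where "\<theta>' = (\<chi> k. if k = n then t else \<theta>$k)"
    have inv': "\<forall>k. invertible (Cmat f s (\<theta>'$k))" using inv it by (simp add: \<theta>'_def)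
    have "EM_Q f s \<Psi> \<sigma> y thold \<theta>' \<le> EM_Q f s \<Psi> \<sigma> y thold \<theta>" using H inv' by blast
    then have le: "(\<Sum>k\<in>UNIV. Qkn f s \<Psi> \<sigma> thold y k (\<theta>$k)) \<le> (\<Sum>k\<in>UNIV. Qkn f s \<Psi> \<sigma> thold y k (\<theta>'$k))"
      by (simp add: EMQ_eq[OF inv] EMQ_eq[OF inv'])
    have "(\<Sum>k\<in>UNIV. Qkn f s \<Psi> \<sigma> thold y k (\<theta>$k)) = Qkn f s \<Psi> \<sigma> thold y n (\<theta>$n) + (\<Sum>k\<in>UNIV - {n}. Qkn f s \<Psi> \<sigma> thold y k (\<theta>$k))"
      by (rule sum.remove) simp_all
    moreover have "(\<Sum>k\<in>UNIV. Qkn f s \<Psi> \<sigma> thold y k (\<theta>'$k)) = Qkn f s \<Psi> \<sigma> thold y n t + (\<Sum>k\<in>UNIV - {n}. Qkn f s \<Psi> \<sigma> thold y k (\<theta>$k))"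
    proof -
      have "(\<Sum>k\<in>UNIV. Qkn f s \<Psi> \<sigma> thold y k (\<theta>'$k)) = Qkn f s \<Psi> \<sigma> thold y n (\<theta>'$n) + (\<Sum>k\<in>UNIV - {n}. Qkn f s \<Psi> \<sigma> thold y k (\<theta>'$k))"
        by (rule sum.remove) simp_all
      moreover have "(\<Sum>k\<in>UNIV - {n}. Qkn f s \<Psi> \<sigma> thold y k (\<theta>'$k)) = (\<Sum>k\<in>UNIV - {n}. Qkn f s \<Psi> \<sigma> thold y k (\<theta>$k))"
        by (intro sum.cong refl) (simp add: \<theta>'_def)
      ultimately show ?thesis by (simp add: \<theta>'_def)
    qed
    ultimately show "Qkn f s \<Psi> \<sigma> thold y n (\<theta>$n) \<le> Qkn f s \<Psi> \<sigma> thold y n t" using le by simp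
  qed
next
  assume H: "\<forall>n. \<forall>t. invertible (Cmat f s t) \<longrightarrow> Qkn f s \<Psi> \<sigma> thold y n (\<theta>$n) \<le> Qkn f s \<Psi> \<sigma> thold y n t"
  show "\<forall>\<theta>'::real^'n. (\<forall>n. invertible (Cmat f s (\<theta>'$n))) \<longrightarrow>
                 EM_Q f s \<Psi> \<sigma> y thold \<theta>' \<le> EM_Q f s \<Psi> \<sigma> y thold \<theta>"
  proof (intro allI impI)
    fix \<theta>' :: "real^'n" assume inv': "\<forall>n. invertible (Cmat f s (\<theta>'$n))"
    have "(\<Sum>k\<in>UNIV. Qkn f s \<Psi> \<sigma> thold y k (\<theta>$k)) \<le> (\<Sum>k\<in>UNIV. Qkn f s \<Psi> \<sigma> thold y k (\<theta>'$k))"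
      using H inv' by (intro sum_mono) blast
    then show "EM_Q f s \<Psi> \<sigma> y thold \<theta>' \<le> EM_Q f s \<Psi> \<sigma> y thold \<theta>"
      by (simp add: EMQ_eq[OF inv] EMQ_eq[OF inv'])
  qed
qed

end

theorem proposition1:
  fixes \<Psi> :: "'n::finite \<Rightarrow> complex^'m::finite^'n"
    and \<sigma> :: real
    and f :: "real \<Rightarrow> real \<Rightarrow> complex"
    and s :: "'m \<Rightarrow> real"
    and y :: "real^'n"
    and thold :: "real^'n"
  assumes "\<sigma> > 0"
    and "herm_psd_fun f"
    and "\<forall>n. invertible (Cmat f s (thold$n))"
  shows "(\<forall>n. post_mean f s \<Psi> \<sigma> thold y n = w_tilde f s \<Psi> \<sigma> thold y n)
       \<and> (\<forall>\<theta>::real^'n. (\<forall>n. invertible (Cmat f s (\<theta>$n))) \<longrightarrow>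
            ((\<forall>\<theta>'::real^'n. (\<forall>n. invertible (Cmat f s (\<theta>'$n))) \<longrightarrow>
                 EM_Q f s \<Psi> \<sigma> y thold \<theta>' \<le> EM_Q f s \<Psi> \<sigma> y thold \<theta>)
             \<longleftrightarrow>
             (\<forall>n. \<forall>t. invertible (Cmat f s t) \<longrightarrow>
                 Qkn f s \<Psi> \<sigma> thold y n (\<theta>$n) \<le> Qkn f s \<Psi> \<sigma> thold y n t)))"
proof -
  interpret em \<Psi> \<sigma> f s y thold
    using assms by unfold_locales auto
  show ?thesis using post_mean_eq EM_equiv by blast
qed


end
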